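(* Let $N\ge1$. For $\alpha\in(-1,1)$ let $\lambda^{(N)}_0(\alpha)<\lambda^{(N)}_1(\alpha)<\dots<\lambda^{(N)}_N(\alpha)$ be the zeros of $\tilde\phi_{N+1}$ (equivalently the eigenvalues of $\tilde{\mathbf M}$). Then: (1) for each $k=0,\dots,N$, $\dfrac{\partial\lambda^{(N)}_k}{\partial\alpha}(\alpha)<0$ for all $\alpha\in(-1,1)$; (2) $\lambda^{(N)}_k<\lambda^{(N-1)}_k<\lambda^{(N)}_{k+1}$ for $k=0,\dots,N-1$ (where $\lambda^{(N-1)}_k$ are the zeros of $\tilde\phi_N$); (3) $\lambda^{(N)}_0<\dfrac{\int_{-1}^1\mu\,\omega\,d\mu}{\int_{-1}^1\omega\,d\mu}<\lambda^{(N)}_N$; in particular $\lambda^{(N)}_0<E_1/E_0<\lambda^{(N)}_N$ for the ansatz moments described below.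
   Context: For a parameter $\alpha\in(-1,1)$ define on $[-1,1]$ the weights $\omega(\mu)=(1+\alpha\mu)^{-4}$ and $\tilde\omega(\mu)=(1+\alpha\mu)^{-5}$. Let $\{\phi_k\}_{k\ge0}$ (resp. $\{\tilde\phi_k\}_{k\ge0}$) be the monic orthogonal polynomials on $[-1,1]$ with respect to $\omega$ (resp. $\tilde\omega$); their coefficients depend smoothly on $\alpha$. Let $\tilde K_{k,k}=\int_{-1}^1\tilde\phi_k^2\tilde\omega\,d\mu$, $\tilde{\boldsymbol\Lambda}=\mathrm{diag}(\tilde K_{0,0},\dots,\tilde K_{N,N})$ and $\tilde{\mathbf M}=\tilde{\boldsymbol\Lambda}^{-1}\mathbf G$ with $G_{i,j}=\int_{-1}^1\mu\,\tilde\phi_i\tilde\phi_j\,\tilde\omega\,d\mu$, $0\le i,j\le N$. The ansatz is $\hat I(\mu)=\sum_{i=0}^N f_i\,\omega(\mu)\phi_i(\mu)$ with $f_0\neq0$ and $f_1=0$, and its moments are $E_k=\int_{-1}^1\mu^k\hat I\,d\mu$; for such an ansatz $E_1/E_0=\int_{-1}^1\mu\,\omega\,d\mu\big/\int_{-1}^1\omega\,d\mu$. *)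

theory Defs
  imports "HOL-Analysis.Analysis" "HOL-Computational_Algebra.Polynomial"
begin

definition om :: "real \<Rightarrow> real \<Rightarrow> real" where
  "om a \<mu> = 1 / (1 + a * \<mu>) ^ 4"

definition omt :: "real \<Rightarrow> real \<Rightarrow> real" where
  "omt a \<mu> = 1 / (1 + a * \<mu>) ^ 5"

definition ipw :: "(real \<Rightarrow> real) \<Rightarrow> real poly \<Rightarrow> real poly \<Rightarrow> real" where
  "ipw w p q = integral {-1..1} (\<lambda>\<mu>. poly p \<mu> * poly q \<mu> * w \<mu>)"

definition mop :: "(real \<Rightarrow> real) \<Rightarrow> nat \<Rightarrow> real poly" where
  "mop w k = (THE p. degree p = k \<and> lead_coeff p = 1 \<and>
                     (\<forall>q. degree q < k \<longrightarrow> ipw w p q = 0))"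

text \<open>lam a n k: the k-th smallest (0-based) real zero of tilde phi_n for parameter a.
  Thus lambda^(N)_k(alpha) = lam alpha (N+1) k.\<close>
definition lam :: "real \<Rightarrow> nat \<Rightarrow> nat \<Rightarrow> real" where
  "lam a n k = sorted_list_of_set {x. poly (mop (omt a) n) x = 0} ! k"

definition ansatz :: "real \<Rightarrow> nat \<Rightarrow> (nat \<Rightarrow> real) \<Rightarrow> real \<Rightarrow> real" where
  "ansatz a N f \<mu> = (\<Sum>i\<le>N. f i * om a \<mu> * poly (mop (om a) i) \<mu>)"

definition moment :: "real \<Rightarrow> nat \<Rightarrow> (nat \<Rightarrow> real) \<Rightarrow> nat \<Rightarrow> real" where
  "moment a N f k = integral {-1..1} (\<lambda>\<mu>. \<mu> ^ k * ansatz a N f \<mu>)"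

end

theory Submission
  imports Defs
begin

definition goodw :: "(real \<Rightarrow> real) \<Rightarrow> bool" where
  "goodw w \<longleftrightarrow> continuous_on {-1..1} w \<and> (\<forall>x\<in>{-1..1}. 0 < w x)"

definition lowdeg :: "real poly \<Rightarrow> nat \<Rightarrow> bool" where
  "lowdeg q n \<longleftrightarrow> (\<forall>i\<ge>n. coeff q i = 0)"

lemma ipw_integrable:
  fixes w :: "real \<Rightarrow> real"
  assumes "continuous_on {-1..1} w"
  shows "(\<lambda>\<mu>. poly p \<mu> * poly q \<mu> * w \<mu>) integrable_on {-1..1}"
  by (rule integrable_continuous_interval) (intro continuous_intros assms)

lemma ipw_sym: "ipw w p q = ipw w q p"
  unfolding ipw_def by (simp add: mult.commute mult.left_commute)

lemma ipw_add1:
  assumes "continuous_on {-1..1} w"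
  shows "ipw w (p + q) r = ipw w p r + ipw w q r"
proof -
  have "ipw w (p + q) r = integral {-1..1} (\<lambda>\<mu>. poly p \<mu> * poly r \<mu> * w \<mu> + poly q \<mu> * poly r \<mu> * w \<mu>)"
    unfolding ipw_def by (simp add: algebra_simps)
  also have "\<dots> = ipw w p r + ipw w q r"
    unfolding ipw_def by (intro integral_add ipw_integrable assms)
  finally show ?thesis .
qed

lemma ipw_smult1: "ipw w (smult c p) q = c * ipw w p q"
proof -
  have "ipw w (smult c p) q = integral {-1..1} (\<lambda>\<mu>. c * (poly p \<mu> * poly q \<mu> * w \<mu>))"
    unfolding ipw_def by (simp add: algebra_simps)
  also have "\<dots> = c * ipw w p q" unfolding ipw_def by simp
  finally show ?thesis .
qed

lemma ipw_minus1: "ipw w (- p) q = - ipw w p q"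
  using ipw_smult1[of w "-1" p q] by simp

lemma ipw_diff1:
  assumes "continuous_on {-1..1} w"
  shows "ipw w (p - q) r = ipw w p r - ipw w q r"
  using ipw_add1[OF assms, of p "-q" r] ipw_minus1[of w q r] by simp

lemma ipw_0 [simp]: "ipw w 0 q = 0" "ipw w q 0 = 0"
  unfolding ipw_def by simp_all

lemma ipw_add2:
  assumes "continuous_on {-1..1} w"
  shows "ipw w r (p + q) = ipw w r p + ipw w r q"
  using ipw_add1[OF assms] ipw_sym by metis

lemma ipw_diff2:
  assumes "continuous_on {-1..1} w"
  shows "ipw w r (p - q) = ipw w r p - ipw w r q"
  using ipw_diff1[OF assms] ipw_sym by metis

lemma ipw_smult2: "ipw w q (smult c p) = c * ipw w q p"
  using ipw_smult1 ipw_sym by metis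

lemma ipw_sum1:
  assumes "continuous_on {-1..1} w"
  shows "ipw w (\<Sum>i\<in>A. f i) q = (\<Sum>i\<in>A. ipw w (f i) q)"
proof (induction A rule: infinite_finite_induct)
  case (insert x F)
  then show ?case by (simp add: ipw_add1[OF assms])
qed auto

lemma ipw_x: "ipw w (pCons 0 p) q = ipw w p (pCons 0 q)"
  unfolding ipw_def by (simp add: algebra_simps)

lemma ipw_mult: "ipw w (p * q) r = ipw w p (q * r)"
  unfolding ipw_def by (simp add: algebra_simps)

lemma poly_zero_on_interval:
  fixes p :: "real poly"
  assumes "\<And>x. x \<in> {-1..1} \<Longrightarrow> poly p x = 0"
  shows "p = 0"
proof (rule ccontr)
  assume "p \<noteq> 0"
  then have "finite {x. poly p x = 0}" by (rule poly_roots_finite)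
  moreover have "{-1..1::real} \<subseteq> {x. poly p x = 0}" using assms by auto
  ultimately have "finite {-1..1::real}" by (rule finite_subset[rotated])
  then show False using infinite_Icc[of "-1::real" 1] by simp
qed

lemma posint:
  assumes w: "goodw w" and r: "r \<noteq> 0" and nn: "\<And>x. x \<in> {-1..1} \<Longrightarrow> poly r x \<ge> 0"
  shows "integral {-1..1} (\<lambda>x. poly r x * w x) > 0"
proof -
  have c: "continuous_on {-1..1} (\<lambda>x. poly r x * w x)"
    using w unfolding goodw_def by (intro continuous_intros) auto
  have nn2: "\<And>x. x \<in> {-1..1} \<Longrightarrow> poly r x * w x \<ge> 0"
    using nn w unfolding goodw_def by (simp add: less_imp_le)
  have "integral {-1..1} (\<lambda>x. poly r x * w x) \<ge> 0"
    by (rule integral_nonneg) (use integrable_continuous_interval[OF c] nn2 in auto)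
  moreover have "integral {-1..1} (\<lambda>x. poly r x * w x) \<noteq> 0"
  proof
    assume "integral {-1..1} (\<lambda>x. poly r x * w x) = 0"
    then have "\<forall>x\<in>{-1..1}. poly r x * w x = 0"
      using integral_eq_0_iff[OF c _ nn2] by simp
    then have "\<And>x. x \<in> {-1..1} \<Longrightarrow> poly r x = 0"
      using w unfolding goodw_def by force
    then have "r = 0" by (rule poly_zero_on_interval)
    with r show False by simp
  qed
  ultimately show ?thesis by simp
qed

lemma ipw_pos:
  assumes "goodw w" "p \<noteq> 0"
  shows "ipw w p p > 0"
proof -
  have "ipw w p p = integral {-1..1} (\<lambda>x. poly (p * p) x * w x)"
    unfolding ipw_def by simp
  also have "\<dots> > 0"
    using assms by (intro posint) auto
  finally show ?thesis .
qed

lemma ipw_self_eq0: "goodw w \<Longrightarrow> ipw w p p = 0 \<Longrightarrow> p = 0"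
  using ipw_pos by fastforce

fun opol :: "(real \<Rightarrow> real) \<Rightarrow> nat \<Rightarrow> real poly" where
  "opol w 0 = 1"
| "opol w (Suc 0) = pCons 0 1 - smult (ipw w (pCons 0 1) 1 / ipw w 1 1) 1"
| "opol w (Suc (Suc n)) =
     pCons 0 (opol w (Suc n))
     - smult (ipw w (pCons 0 (opol w (Suc n))) (opol w (Suc n)) / ipw w (opol w (Suc n)) (opol w (Suc n))) (opol w (Suc n))
     - smult (ipw w (opol w (Suc n)) (opol w (Suc n)) / ipw w (opol w n) (opol w n)) (opol w n)"

lemma opol_coeff: "coeff (opol w n) n = 1 \<and> (\<forall>i>n. coeff (opol w n) i = 0)"
proof (induction w n rule: opol.induct)
  case (1 w)
  then show ?case by auto
next
  case (2 w)
  then show ?case by (auto simp: coeff_pCons split: nat.splits)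
next
  case (3 w n)
  then show ?case by (auto simp: coeff_pCons split: nat.splits)
qed

lemma opol_lowdeg: "lowdeg (opol w n) (Suc n)"
  using opol_coeff[of w n] unfolding lowdeg_def by auto

lemma degree_opol [simp]: "degree (opol w n) = n"
proof -
  have "degree (opol w n) \<le> n" using opol_coeff[of w n] by (intro degree_le) auto
  moreover have "n \<le> degree (opol w n)" using opol_coeff[of w n] by (intro le_degree) auto
  ultimately show ?thesis by simp
qed

lemma lead_opol [simp]: "lead_coeff (opol w n) = 1"
  using opol_coeff[of w n] by simp

lemma opol_nz [simp]: "opol w n \<noteq> 0"
  using lead_opol[of w n] by (metis leading_coeff_0_iff zero_neq_one)

lemma lowdeg_mono: "lowdeg q n \<Longrightarrow> n \<le> m \<Longrightarrow> lowdeg q m"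
  unfolding lowdeg_def by auto

lemma lowdeg_x: "lowdeg q n \<Longrightarrow> lowdeg (pCons 0 q) (Suc n)"
  unfolding lowdeg_def by (auto simp: coeff_pCons split: nat.splits)

lemma lowdeg_0: "lowdeg q 0 \<Longrightarrow> q = 0"
  unfolding lowdeg_def by (simp add: poly_eq_iff)

lemma lowdeg_degree: "lowdeg q n \<longleftrightarrow> q = 0 \<or> degree q < n"
  unfolding lowdeg_def
  by (metis coeff_0 coeff_eq_0 le_degree leading_coeff_0_iff linorder_not_le order_less_le_trans)

lemma lowdeg_step:
  assumes "lowdeg q (Suc n)" "lowdeg p (Suc n)" "coeff p n = 1"
  shows "lowdeg (q - smult (coeff q n) p) n"
  using assms unfolding lowdeg_def
proof (intro allI impI)
  fix i assume "\<forall>i\<ge>Suc n. coeff q i = 0" "\<forall>i\<ge>Suc n. coeff p i = 0" "coeff p n = 1" "n \<le> i"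
  then show "coeff (q - smult (coeff q n) p) i = 0"
    by (cases "i = n") auto
qed

lemma lowdeg_diff: "lowdeg p n \<Longrightarrow> lowdeg q n \<Longrightarrow> lowdeg (p - q) n"
  unfolding lowdeg_def by auto

lemma lowdeg_add: "lowdeg p n \<Longrightarrow> lowdeg q n \<Longrightarrow> lowdeg (p + q) n"
  unfolding lowdeg_def by auto

lemma lowdeg_smult: "lowdeg p n \<Longrightarrow> lowdeg (smult c p) n"
  unfolding lowdeg_def by auto

definition orth :: "(real \<Rightarrow> real) \<Rightarrow> nat \<Rightarrow> bool" where
  "orth w n \<longleftrightarrow> (\<forall>q. lowdeg q n \<longrightarrow> ipw w (opol w n) q = 0)"

lemma opol_orth01:
  assumes w: "goodw w"
  shows "orth w 0" "orth w (Suc 0)"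
proof -
  show "orth w 0" unfolding orth_def by (auto dest: lowdeg_0)
  have c: "continuous_on {-1..1} w" using w goodw_def by auto
  have pos: "ipw w 1 1 > 0" using ipw_pos[OF w, of 1] by simp
  show "orth w (Suc 0)" unfolding orth_def
  proof (intro allI impI)
    fix q assume "lowdeg q (Suc 0)"
    then have q: "q = smult (coeff q 0) 1"
      unfolding lowdeg_def by (auto simp: poly_eq_iff coeff_1 coeff_pCons split: nat.splits)
    show "ipw w (opol w (Suc 0)) q = 0"
    proof -
      have "ipw w (opol w (Suc 0)) q = coeff q 0 * (ipw w (pCons 0 1) 1 - ipw w (pCons 0 1) 1 / ipw w 1 1 * ipw w 1 1)"
        by (subst q) (simp only: opol.simps ipw_smult2 ipw_diff1[OF c] ipw_smult1)
      then show ?thesis using pos by simp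
    qed
  qed
qed

lemma orth_step:
  assumes w: "goodw w" and o0: "orth w n" and o1: "orth w (Suc n)"
  shows "orth w (Suc (Suc n))"
proof -
  have c: "continuous_on {-1..1} w" using w goodw_def by auto
  define P0 where "P0 = opol w n"
  define P1 where "P1 = opol w (Suc n)"
  define \<beta> where "\<beta> = ipw w (pCons 0 P1) P1 / ipw w P1 P1"
  define \<gamma> where "\<gamma> = ipw w P1 P1 / ipw w P0 P0"
  have P2: "opol w (Suc (Suc n)) = pCons 0 P1 - smult \<beta> P1 - smult \<gamma> P0"
    unfolding P0_def P1_def \<beta>_def \<gamma>_def by simp
  have pos1: "ipw w P1 P1 > 0" unfolding P1_def by (rule ipw_pos[OF w]) simp
  have pos0: "ipw w P0 P0 > 0" unfolding P0_def by (rule ipw_pos[OF w]) simp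
  have ld0: "lowdeg P0 (Suc n)" unfolding P0_def by (rule opol_lowdeg)
  have ld1: "lowdeg P1 (Suc (Suc n))" unfolding P1_def by (rule opol_lowdeg)
  have c1: "coeff P1 (Suc n) = 1" unfolding P1_def using opol_coeff by blast
  have c0: "coeff P0 n = 1" unfolding P0_def using opol_coeff by blast
  have orth1: "\<And>q. lowdeg q (Suc n) \<Longrightarrow> ipw w P1 q = 0" using o1 unfolding orth_def P1_def by blast
  have orth0: "\<And>q. lowdeg q n \<Longrightarrow> ipw w P0 q = 0" using o0 unfolding orth_def P0_def by blast
  have P01: "ipw w P0 P1 = 0" using orth1[OF ld0] ipw_sym by metis
  have A1: "ipw w (opol w (Suc (Suc n))) P1 = 0"
    unfolding P2 using pos1 P01
    by (simp add: ipw_diff1[OF c] ipw_smult1 \<beta>_def)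
  have ldx: "lowdeg (pCons 0 P0 - smult 1 P1) (Suc n)"
    using lowdeg_step[of "pCons 0 P0" "Suc n" P1] lowdeg_x[OF ld0] ld1 c0 c1 by simp
  have X: "ipw w P1 (pCons 0 P0) = ipw w P1 P1"
    using orth1[OF ldx] by (simp add: ipw_diff2[OF c])
  have A2: "ipw w (opol w (Suc (Suc n))) P0 = 0"
    unfolding P2 using pos0 orth1[OF ld0] X
    by (simp add: ipw_diff1[OF c] ipw_smult1 \<gamma>_def ipw_x)
  show ?thesis unfolding orth_def
  proof (intro allI impI)
    fix q assume q: "lowdeg q (Suc (Suc n))"
    define d where "d = coeff q (Suc n)"
    define q1 where "q1 = q - smult d P1"
    have l1: "lowdeg q1 (Suc n)" unfolding q1_def d_def by (rule lowdeg_step[OF q ld1 c1])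
    define e where "e = coeff q1 n"
    define q2 where "q2 = q1 - smult e P0"
    have l2: "lowdeg q2 n" unfolding q2_def e_def by (rule lowdeg_step[OF l1 ld0 c0])
    have qe: "q = smult d P1 + smult e P0 + q2" unfolding q2_def q1_def by simp
    have A3: "ipw w (opol w (Suc (Suc n))) q2 = 0"
      unfolding P2
      using orth1[OF lowdeg_x[OF l2]] orth1[OF lowdeg_mono[OF l2]] orth0[OF l2]
      by (simp add: ipw_diff1[OF c] ipw_smult1 ipw_x)
    show "ipw w (opol w (Suc (Suc n))) q = 0"
      unfolding qe using A1 A2 A3 by (simp add: ipw_add2[OF c] ipw_smult2)
  qed
qed

lemma opol_orth:
  assumes w: "goodw w"
  shows "orth w n"
proof -
  have "orth w n \<and> orth w (Suc n)"
    by (induction n) (use opol_orth01[OF w] orth_step[OF w] in auto)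
  then show ?thesis by simp
qed

lemma opol_orth':
  assumes "goodw w" "lowdeg q n"
  shows "ipw w (opol w n) q = 0"
  using opol_orth[OF assms(1)] assms(2) unfolding orth_def by blast

lemma mop_opol:
  assumes w: "goodw w"
  shows "mop w n = opol w n"
  unfolding mop_def
proof (rule the_equality)
  show "degree (opol w n) = n \<and> lead_coeff (opol w n) = 1 \<and> (\<forall>q. degree q < n \<longrightarrow> ipw w (opol w n) q = 0)"
    using opol_orth'[OF w] lowdeg_degree lead_opol[of w n] degree_opol[of w n] by blast
next
  fix p assume p: "degree p = n \<and> lead_coeff p = 1 \<and> (\<forall>q. degree q < n \<longrightarrow> ipw w p q = 0)"
  have c: "continuous_on {-1..1} w" using w goodw_def by auto
  define d where "d = p - opol w n"
  have ld: "lowdeg d n" unfolding lowdeg_def d_def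
  proof (intro allI impI)
    fix i assume "n \<le> i"
    then show "coeff (p - opol w n) i = 0"
      using p opol_coeff[of w n] by (cases "i = n") (auto intro: coeff_eq_0)
  qed
  show "p = opol w n"
  proof (cases "d = 0")
    case False
    then have "degree d < n" using ld lowdeg_degree by auto
    then have "ipw w p d = 0" using p by auto
    moreover have "ipw w (opol w n) d = 0" using opol_orth'[OF w ld] .
    ultimately have "ipw w d d = 0" using ipw_diff1[OF c, of p "opol w n" d] unfolding d_def[symmetric] by simp
    then show ?thesis using ipw_self_eq0[OF w] False by simp
  qed (simp add: d_def)
qed


definition pr :: "real set \<Rightarrow> real poly" where
  "pr R = (\<Prod>r\<in>R. [:-r, 1:])"

lemma poly_pr: "poly (pr R) x = (\<Prod>r\<in>R. x - r)"
  unfolding pr_def by (simp add: poly_prod)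

lemma pr_facts: "finite R \<Longrightarrow> pr R \<noteq> 0 \<and> degree (pr R) = card R \<and> lead_coeff (pr R) = 1"
proof (induction R rule: finite_induct)
  case empty
  then show ?case by (simp add: pr_def)
next
  case (insert x F)
  have e: "pr (insert x F) = [:-x,1:] * pr F" unfolding pr_def using insert by simp
  show ?case unfolding e using insert degree_mult_eq[of "[:-x,1:]" "pr F"] lead_coeff_mult[of "[:-x,1:]" "pr F"]
    by (auto simp del: mult_pCons_left)
qed

lemma pr_dvd: "finite R \<Longrightarrow> (\<forall>r\<in>R. poly p r = 0) \<Longrightarrow> pr R dvd p"
proof (induction R arbitrary: p rule: finite_induct)
  case empty
  then show ?case by (simp add: pr_def)
next
  case (insert x F)
  have "poly p x = 0" using insert by simp
  then obtain s where s: "p = [:-x,1:] * s" using poly_eq_0_iff_dvd by (metis dvdE)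
  have "\<forall>r\<in>F. poly s r = 0"
  proof
    fix r assume r: "r \<in> F"
    then have "r \<noteq> x" using insert by auto
    moreover have "poly p r = 0" using insert r by simp
    ultimately show "poly s r = 0" using s by simp
  qed
  then have "pr F dvd s" using insert by simp
  moreover have "pr (insert x F) = [:-x,1:] * pr F" unfolding pr_def using insert by simp
  ultimately show ?case unfolding s by (metis mult_dvd_mono dvd_refl)
qed

lemma pr_eq:
  assumes "finite R" "\<forall>r\<in>R. poly p r = 0" "card R = degree p" "lead_coeff p = 1"
  shows "p = pr R"
proof -
  obtain s where s: "p = pr R * s" using pr_dvd[OF assms(1,2)] by (metis dvdE)
  have f: "pr R \<noteq> 0" "degree (pr R) = card R" "lead_coeff (pr R) = 1" using pr_facts[OF assms(1)] by auto
  have "p \<noteq> 0" using assms(4) by auto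
  then have "s \<noteq> 0" using s by auto
  then have "degree p = degree (pr R) + degree s" unfolding s using f by (simp add: degree_mult_eq)
  then have ds: "degree s = 0" using f assms(3) by simp
  have "lead_coeff s = 1" using assms(4) f unfolding s by (simp add: lead_coeff_mult)
  then have "s = 1" using ds by (metis coeff_pCons_0 degree_0_id one_pCons)
  then show ?thesis using s by simp
qed

lemma prod_sign:
  fixes x :: real
  shows "finite R \<Longrightarrow> x \<notin> R \<Longrightarrow> (\<Prod>r\<in>R. x - r) \<noteq> 0 \<and> ((\<Prod>r\<in>R. x - r) > 0 \<longleftrightarrow> even (card {r\<in>R. x < r}))"
proof (induction R rule: finite_induct)
  case empty
  then show ?case by simp
next
  case (insert a F)
  have fin: "finite {r\<in>F. x < r}" using insert by auto
  have "{r\<in>insert a F. x < r} = (if x < a then insert a {r\<in>F. x < r} else {r\<in>F. x < r})" by auto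
  then have cd: "card {r\<in>insert a F. x < r} = (if x < a then Suc (card {r\<in>F. x < r}) else card {r\<in>F. x < r})"
    using insert fin by auto
  have xa: "x \<noteq> a" using insert by auto
  have IH: "(\<Prod>r\<in>F. x - r) \<noteq> 0" "(\<Prod>r\<in>F. x - r) > 0 \<longleftrightarrow> even (card {r\<in>F. x < r})" using insert by auto
  have e: "(\<Prod>r\<in>insert a F. x - r) = (x - a) * (\<Prod>r\<in>F. x - r)" using insert by simp
  show ?case unfolding e cd using IH xa
    by (cases "x < a") (auto simp: zero_less_mult_iff)
qed

lemma roots_pr: "finite R \<Longrightarrow> {x. poly (pr R) x = 0} = R"
  by (auto simp: poly_pr)

definition rootfun :: "(real \<Rightarrow> real) \<Rightarrow> nat \<Rightarrow> (nat \<Rightarrow> real) \<Rightarrow> bool" where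
  "rootfun w n y \<longleftrightarrow> strict_mono_on {..<n} y \<and> {x. poly (opol w n) x = 0} = y ` {..<n}"

lemma rootfun_pr:
  assumes "rootfun w n y"
  shows "opol w n = pr (y ` {..<n})"
proof (rule pr_eq)
  have inj: "inj_on y {..<n}" using assms unfolding rootfun_def by (auto intro: strict_mono_on_imp_inj_on)
  show "finite (y ` {..<n})" by simp
  show "\<forall>r\<in>y ` {..<n}. poly (opol w n) r = 0" using assms unfolding rootfun_def by auto
  show "card (y ` {..<n}) = degree (opol w n)" using card_image[OF inj] by simp
  show "lead_coeff (opol w n) = 1" by (rule lead_opol)
qed

lemma sl_strict:
  assumes "strict_mono_on {..<n} y"
  shows "sorted_list_of_set (y ` {..<n}) = map y [0..<n]"
proof -
  have inj: "inj_on y {..<n}" using assms by (auto intro: strict_mono_on_imp_inj_on)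
  have "sorted_wrt (<) (map y [0..<n])"
    using assms unfolding sorted_wrt_map by (auto simp: sorted_wrt_iff_nth_less strict_mono_on_def)
  moreover have "set (map y [0..<n]) = y ` {..<n}" by auto
  moreover have "length (map y [0..<n]) = card (y ` {..<n})" using card_image[OF inj] by simp
  ultimately show ?thesis by (intro sorted_list_of_set_unique[THEN iffD1]) auto
qed

lemma opol_at_root:
  assumes "poly (opol w (Suc m)) y = 0"
  shows "poly (opol w (Suc (Suc m))) y =
     - (ipw w (opol w (Suc m)) (opol w (Suc m)) / ipw w (opol w m) (opol w m)) * poly (opol w m) y"
  using assms by simp

declare opol.simps(2,3)[simp del]

lemma monic_pinfty:
  fixes p :: "real poly"
  assumes "lead_coeff p = 1"
  shows "\<exists>T. \<forall>x\<ge>T. poly p x \<ge> 1"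
  using poly_pinfty_gt_lc[of p] assms by simp

lemma opol_minfty:
  "\<exists>T. \<forall>x\<le>T. (-1) ^ n * poly (opol w n) x \<ge> 1"
proof (cases n)
  case 0
  then show ?thesis by simp
next
  case (Suc k)
  define Q where "Q = smult ((-1)^n) (pcompose (opol w n) [:0,-1:])"
  have "lead_coeff (pcompose (opol w n) [:0,-1:]) = lead_coeff (opol w n) * lead_coeff [:0,-1::real:] ^ degree (opol w n)"
    by (rule lead_coeff_comp) simp
  then have "lead_coeff (pcompose (opol w n) [:0,-1:]) = (-1)^n"
    using lead_opol[of w n] by simp
  then have "lead_coeff Q = 1" unfolding Q_def by (simp add: power_mult_distrib[symmetric])
  then obtain T where T: "\<forall>x\<ge>T. poly Q x \<ge> 1" using monic_pinfty by blast
  show ?thesis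
  proof (intro exI allI impI)
    fix x :: real assume "x \<le> -T"
    then have "poly Q (-x) \<ge> 1" using T by auto
    then show "(-1) ^ n * poly (opol w n) x \<ge> 1" unfolding Q_def by (simp add: poly_pcompose)
  qed
qed

lemma interlace_step:
  assumes w: "goodw w"
    and rx: "rootfun w m xs" and ry: "rootfun w (Suc m) ys"
    and il: "\<forall>k<m. ys k < xs k \<and> xs k < ys (Suc k)"
  shows "\<exists>zs. rootfun w (Suc (Suc m)) zs \<and> (\<forall>k<Suc m. zs k < ys k \<and> ys k < zs (Suc k))"
proof -
  define P0 where "P0 = opol w m"
  define P2 where "P2 = opol w (Suc (Suc m))"
  define \<gamma> where "\<gamma> = ipw w (opol w (Suc m)) (opol w (Suc m)) / ipw w (opol w m) (opol w m)"
  have \<gamma>: "\<gamma> > 0" unfolding \<gamma>_def using ipw_pos[OF w, of "opol w m"] ipw_pos[OF w, of "opol w (Suc m)"] by simp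
  have xsm: "strict_mono_on {..<m} xs" using rx rootfun_def by auto
  have ysm: "strict_mono_on {..<Suc m} ys" using ry rootfun_def by auto
  have ysr: "\<And>j. j < Suc m \<Longrightarrow> poly (opol w (Suc m)) (ys j) = 0" using ry rootfun_def by auto
  have ysle: "\<And>i j. i \<le> j \<Longrightarrow> j < Suc m \<Longrightarrow> ys i \<le> ys j"
    using ysm unfolding strict_mono_on_def by (metis le_less lessThan_iff order.strict_trans1)
  have ysl: "\<And>i j. i < j \<Longrightarrow> j < Suc m \<Longrightarrow> ys i < ys j"
    using ysm unfolding strict_mono_on_def by (meson lessThan_iff order.strict_trans)
  have xsle: "\<And>i j. i \<le> j \<Longrightarrow> j < m \<Longrightarrow> xs i \<le> xs j"
    using xsm unfolding strict_mono_on_def by (metis le_less lessThan_iff order.strict_trans1)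
  have cmp: "\<And>i j. i < m \<Longrightarrow> j < Suc m \<Longrightarrow> (ys j < xs i \<longleftrightarrow> j \<le> i) \<and> ys j \<noteq> xs i"
  proof -
    fix i j assume i: "i < m" and j: "j < Suc m"
    show "(ys j < xs i \<longleftrightarrow> j \<le> i) \<and> ys j \<noteq> xs i"
    proof (cases "j \<le> i")
      case True
      then have "ys j \<le> ys i" using ysle i by simp
      moreover have "ys i < xs i" using il i by simp
      ultimately show ?thesis using True by simp
    next
      case False
      then have "xs i < ys (Suc i)" using il i by simp
      moreover have "ys (Suc i) \<le> ys j" using False j ysle by simp
      ultimately show ?thesis using False by auto
    qed
  qed
  have P0pr: "P0 = pr (xs ` {..<m})" unfolding P0_def by (rule rootfun_pr[OF rx])
  have injx: "inj_on xs {..<m}" using xsm by (rule strict_mono_on_imp_inj_on)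
  have sgn0: "\<And>j. j < Suc m \<Longrightarrow> poly P0 (ys j) \<noteq> 0 \<and> (poly P0 (ys j) > 0 \<longleftrightarrow> even (m - j))"
  proof -
    fix j assume j: "j < Suc m"
    have nin: "ys j \<notin> xs ` {..<m}" using cmp j by auto
    have "{r \<in> xs ` {..<m}. ys j < r} = xs ` {j..<m}" using cmp j by auto
    moreover have "card (xs ` {j..<m}) = m - j"
    proof -
      have "{j..<m} \<subseteq> {..<m}" by auto
      then show ?thesis using card_image[OF inj_on_subset[OF injx, of "{j..<m}"]] by simp
    qed
    ultimately show "poly P0 (ys j) \<noteq> 0 \<and> (poly P0 (ys j) > 0 \<longleftrightarrow> even (m - j))"
      unfolding P0pr poly_pr using prod_sign[OF _ nin] by simp
  qed
  have sgn2: "\<And>j. j < Suc m \<Longrightarrow> poly P2 (ys j) \<noteq> 0 \<and> (poly P2 (ys j) < 0 \<longleftrightarrow> even (m - j))"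
  proof -
    fix j assume j: "j < Suc m"
    have "poly P2 (ys j) = - \<gamma> * poly P0 (ys j)"
      unfolding P2_def P0_def \<gamma>_def by (rule opol_at_root[OF ysr[OF j]])
    then show "poly P2 (ys j) \<noteq> 0 \<and> (poly P2 (ys j) < 0 \<longleftrightarrow> even (m - j))"
      using sgn0[OF j] \<gamma> by (auto simp: mult_less_0_iff zero_less_mult_iff)
  qed
  have ex: "\<forall>j\<in>{..Suc m}. \<exists>r. poly P2 r = 0 \<and> (0 < j \<longrightarrow> ys (j - 1) < r) \<and> (j < Suc m \<longrightarrow> r < ys j)"
  proof
    fix j assume "j \<in> {..Suc m}"
    then have j: "j \<le> Suc m" by simp
    consider "j = 0" | "0 < j" "j < Suc m" | "j = Suc m" using j by linarith
    then show "\<exists>r. poly P2 r = 0 \<and> (0 < j \<longrightarrow> ys (j - 1) < r) \<and> (j < Suc m \<longrightarrow> r < ys j)"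
    proof cases
      case 1
      obtain T where T: "\<forall>x\<le>T. (-1) ^ Suc (Suc m) * poly P2 x \<ge> 1"
        using opol_minfty[of "Suc (Suc m)" w] unfolding P2_def by blast
      define t where "t = min T (ys 0 - 1)"
      have t: "t < ys 0" "(-1) ^ m * poly P2 t \<ge> 1" using T unfolding t_def by auto
      have s0: "poly P2 (ys 0) \<noteq> 0 \<and> (poly P2 (ys 0) < 0 \<longleftrightarrow> even m)" using sgn2[of 0] by simp
      have "poly P2 t * poly P2 (ys 0) < 0"
      proof (cases "even m")
        case True
        then show ?thesis using t s0 by (auto simp: mult_pos_neg)
      next
        case False
        then have "poly P2 t \<le> -1" using t by simp
        then show ?thesis using False s0 by (auto simp: mult_neg_pos)
      qed
      then obtain r where "t < r" "r < ys 0" "poly P2 r = 0" using poly_IVT[OF t(1)] by blast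
      then show ?thesis using 1 by auto
    next
      case 2
      then obtain i where i: "j = Suc i" "i < m" by (metis Suc_less_SucD gr0_conv_Suc)
      have a: "ys i < ys (Suc i)" using ysl i by simp
      have "poly P2 (ys i) * poly P2 (ys (Suc i)) < 0"
        using sgn2[of i] sgn2[of "Suc i"] i by (cases "even (m - i)") (auto simp: mult_less_0_iff)
      then obtain r where "ys i < r" "r < ys (Suc i)" "poly P2 r = 0" using poly_IVT[OF a] by blast
      then show ?thesis using i by auto
    next
      case 3
      obtain T where T: "\<forall>x\<ge>T. poly P2 x \<ge> 1" using monic_pinfty[OF lead_opol[of w "Suc (Suc m)"]] unfolding P2_def by blast
      define t where "t = max T (ys m + 1)"
      have t: "ys m < t" "poly P2 t \<ge> 1" using T unfolding t_def by auto
      have "poly P2 (ys m) < 0" using sgn2[of m] by simp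
      then have "poly P2 (ys m) * poly P2 t < 0" using t by (simp add: mult_neg_pos)
      then obtain r where "ys m < r" "r < t" "poly P2 r = 0" using poly_IVT[OF t(1)] by blast
      then show ?thesis using 3 by auto
    qed
  qed
  then obtain zs where zs: "\<And>j. j \<le> Suc m \<Longrightarrow> poly P2 (zs j) = 0 \<and> (0 < j \<longrightarrow> ys (j - 1) < zs j) \<and> (j < Suc m \<longrightarrow> zs j < ys j)"
    using bchoice[OF ex] by auto
  have zsm: "strict_mono_on {..<Suc (Suc m)} zs"
  proof (rule strict_mono_onI)
    fix i j assume i: "i \<in> {..<Suc (Suc m)}" and j: "j \<in> {..<Suc (Suc m)}" and ij: "i < j"
    have "zs i < ys i" using zs[of i] i ij j by auto
    moreover have "ys i \<le> ys (j - 1)" using ij j by (intro ysle) auto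
    moreover have "ys (j - 1) < zs j" using zs[of j] j ij by auto
    ultimately show "zs i < zs j" by simp
  qed
  have sub: "zs ` {..<Suc (Suc m)} \<subseteq> {x. poly P2 x = 0}" using zs by auto
  have cz: "card (zs ` {..<Suc (Suc m)}) = Suc (Suc m)"
    using card_image[OF strict_mono_on_imp_inj_on[OF zsm]] by simp
  have P2nz: "P2 \<noteq> 0" unfolding P2_def by simp
  have "card {x. poly P2 x = 0} \<le> Suc (Suc m)"
    using card_poly_roots_bound[OF P2nz] unfolding P2_def by simp
  then have "zs ` {..<Suc (Suc m)} = {x. poly P2 x = 0}"
    using card_subset_eq[OF poly_roots_finite[OF P2nz] sub] cz card_mono[OF poly_roots_finite[OF P2nz] sub] by simp
  then have "rootfun w (Suc (Suc m)) zs" unfolding rootfun_def P2_def using zsm by simp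
  moreover have "\<forall>k<Suc m. zs k < ys k \<and> ys k < zs (Suc k)"
  proof (intro allI impI conjI)
    fix k assume k: "k < Suc m"
    show "zs k < ys k" using zs[of k] k by simp
    show "ys k < zs (Suc k)" using zs[of "Suc k"] k by simp
  qed
  ultimately show ?thesis by blast
qed

lemma opol_roots_all:
  assumes w: "goodw w"
  shows "\<exists>xs ys. rootfun w n xs \<and> rootfun w (Suc n) ys \<and> (\<forall>k<n. ys k < xs k \<and> xs k < ys (Suc k))"
proof (induction n)
  case 0
  define \<beta> where "\<beta> = ipw w (pCons 0 1) 1 / ipw w 1 1"
  have p1: "\<And>x. poly (opol w (Suc 0)) x = x - \<beta>" unfolding \<beta>_def by (simp add: opol.simps)
  have "rootfun w (Suc 0) (\<lambda>_. \<beta>)" unfolding rootfun_def p1 by (auto simp: strict_mono_on_def)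
  moreover have "rootfun w 0 (\<lambda>_. 0)" unfolding rootfun_def by simp
  ultimately show ?case by blast
next
  case (Suc n)
  then obtain xs ys where "rootfun w n xs" "rootfun w (Suc n) ys" "\<forall>k<n. ys k < xs k \<and> xs k < ys (Suc k)" by blast
  from interlace_step[OF w this] show ?case using \<open>rootfun w (Suc n) ys\<close> by blast
qed


lemma lowdeg_mult:
  assumes "lowdeg p (Suc a)" "lowdeg q (Suc b)"
  shows "lowdeg (p * q) (Suc (a + b))"
proof -
  consider "p = 0" | "q = 0" | "p \<noteq> 0" "q \<noteq> 0" by blast
  then show ?thesis
  proof cases
    case 3
    then have "degree p < Suc a" "degree q < Suc b" using assms lowdeg_degree by auto
    then have "degree (p * q) < Suc (a + b)" using degree_mult_le[of p q] by linarith
    then show ?thesis using lowdeg_degree by auto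
  qed (auto simp: lowdeg_def)
qed

lemma lowdeg_sum: "(\<And>i. i \<in> A \<Longrightarrow> lowdeg (f i) n) \<Longrightarrow> lowdeg (\<Sum>i\<in>A. f i) n"
  unfolding lowdeg_def by (induction A rule: infinite_finite_induct) (auto simp: coeff_sum)

lemma rootfun_card: "rootfun w n y \<Longrightarrow> card (y ` {..<n}) = n"
  using card_image[OF strict_mono_on_imp_inj_on[of "{..<n}" y]] unfolding rootfun_def by simp

lemma root_in:
  assumes w: "goodw w" and r: "poly (opol w n) r = 0"
  shows "-1 < r \<and> r < 1"
proof -
  have c: "continuous_on {-1..1} w" using w goodw_def by auto
  obtain Q where Q: "opol w n = [:-r,1:] * Q" using r poly_eq_0_iff_dvd by (metis dvdE)
  have Qnz: "Q \<noteq> 0" using Q opol_nz[of w n] by auto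
  have "degree (opol w n) = 1 + degree Q" unfolding Q using Qnz by (subst degree_mult_eq) auto
  then have "degree Q < n" by simp
  then have ld: "lowdeg Q n" using lowdeg_degree by auto
  define R where "R = [:-r,1:] * Q * Q"
  have Rnz: "R \<noteq> 0" unfolding R_def using Qnz by (simp del: mult_pCons_left)
  have "ipw w (opol w n) Q = integral {-1..1} (\<lambda>x. poly R x * w x)"
    unfolding ipw_def R_def Q by (simp add: algebra_simps)
  then have I0: "integral {-1..1} (\<lambda>x. poly R x * w x) = 0" using opol_orth'[OF w ld] by simp
  have I1: "integral {-1..1} (\<lambda>x. poly (-R) x * w x) = 0"
    using I0 integral_neg[of "{-1..1}" "\<lambda>x. poly R x * w x"] by simp
  show ?thesis
  proof (rule ccontr)
    assume "\<not> (-1 < r \<and> r < 1)"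
    then consider "r \<le> -1" | "1 \<le> r" by linarith
    then show False
    proof cases
      case 1
      have "integral {-1..1} (\<lambda>x. poly R x * w x) > 0"
      proof (rule posint[OF w Rnz])
        fix x :: real assume "x \<in> {-1..1}"
        then have "x - r \<ge> 0" using 1 by auto
        moreover have "poly R x = (x - r) * (poly Q x * poly Q x)" unfolding R_def by (simp add: algebra_simps)
        ultimately show "poly R x \<ge> 0" by simp
      qed
      then show False using I0 by simp
    next
      case 2
      have "integral {-1..1} (\<lambda>x. poly (-R) x * w x) > 0"
      proof (rule posint[OF w])
        show "- R \<noteq> 0" using Rnz by simp
        fix x :: real assume "x \<in> {-1..1}"
        then have "x - r \<le> 0" using 2 by auto
        moreover have "poly (-R) x = (r - x) * (poly Q x * poly Q x)" unfolding R_def by (simp add: algebra_simps)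
        ultimately show "poly (-R) x \<ge> 0" by simp
      qed
      then show False using I1 by simp
    qed
  qed
qed

definition QQ :: "real set \<Rightarrow> real \<Rightarrow> real poly" where
  "QQ R r = pr (R - {r})"

definition LL :: "real set \<Rightarrow> real \<Rightarrow> real poly" where
  "LL R r = smult (1 / poly (QQ R r) r) (QQ R r)"

lemma QQ_facts:
  assumes "finite R" "r \<in> R"
  shows "poly (QQ R r) r \<noteq> 0" "\<And>s. s \<in> R \<Longrightarrow> s \<noteq> r \<Longrightarrow> poly (QQ R r) s = 0"
    "pr R = [:-r,1:] * QQ R r" "lowdeg (QQ R r) (card R)"
proof -
  show "poly (QQ R r) r \<noteq> 0" unfolding QQ_def poly_pr using assms by auto
  show "\<And>s. s \<in> R \<Longrightarrow> s \<noteq> r \<Longrightarrow> poly (QQ R r) s = 0" unfolding QQ_def poly_pr using assms by auto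
  show "pr R = [:-r,1:] * QQ R r" unfolding QQ_def pr_def
    by (rule prod.remove[OF assms])
  have "degree (QQ R r) = card R - 1" unfolding QQ_def using pr_facts[of "R - {r}"] assms by simp
  moreover have "card R \<ge> 1" using assms by (auto simp: card_gt_0_iff Suc_le_eq)
  ultimately show "lowdeg (QQ R r) (card R)" using lowdeg_degree by auto
qed

lemma LL_facts:
  assumes "finite R" "r \<in> R"
  shows "\<And>s. s \<in> R \<Longrightarrow> poly (LL R r) s = (if s = r then 1 else 0)"
    "lowdeg (LL R r) (card R)" "LL R r \<noteq> 0"
proof -
  show "\<And>s. s \<in> R \<Longrightarrow> poly (LL R r) s = (if s = r then 1 else 0)"
    unfolding LL_def using QQ_facts[OF assms] by auto
  show "lowdeg (LL R r) (card R)" unfolding LL_def by (rule lowdeg_smult) (rule QQ_facts[OF assms])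
  show "LL R r \<noteq> 0" unfolding LL_def using QQ_facts(1)[OF assms] by auto
qed

lemma interp:
  assumes "finite R" "lowdeg s (card R)"
  shows "s = (\<Sum>r\<in>R. smult (poly s r) (LL R r))"
proof (rule ccontr)
  define d where "d = s - (\<Sum>r\<in>R. smult (poly s r) (LL R r))"
  assume "\<not> ?thesis"
  then have dnz: "d \<noteq> 0" unfolding d_def by simp
  have "lowdeg d (card R)" unfolding d_def
    by (intro lowdeg_diff assms lowdeg_sum lowdeg_smult LL_facts(2)[OF assms(1)])
  then have dd: "degree d < card R" using dnz lowdeg_degree by auto
  have "\<And>t. t \<in> R \<Longrightarrow> poly d t = 0"
  proof -
    fix t assume t: "t \<in> R"
    have "(\<Sum>r\<in>R. poly s r * poly (LL R r) t) = (\<Sum>r\<in>R. if r = t then poly s r else 0)"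
      using LL_facts(1)[OF assms(1) _ t] by (intro sum.cong) auto
    also have "\<dots> = poly s t" using t assms(1) by simp
    finally show "poly d t = 0" unfolding d_def by (simp add: poly_sum)
  qed
  then have "R \<subseteq> {x. poly d x = 0}" by auto
  then have "card R \<le> card {x. poly d x = 0}" using poly_roots_finite[OF dnz] by (rule card_mono[rotated])
  also have "\<dots> \<le> degree d" by (rule card_poly_roots_bound[OF dnz])
  finally show False using dd by simp
qed

lemma quadrature:
  assumes w: "goodw w" and ry: "rootfun w n y" and f: "lowdeg f (2 * n)"
  shows "ipw w f 1 = (\<Sum>r\<in>y ` {..<n}. poly f r * ipw w (LL (y ` {..<n}) r) 1)"
proof -
  have c: "continuous_on {-1..1} w" using w goodw_def by auto
  define R where "R = y ` {..<n}"
  have fin: "finite R" unfolding R_def by simp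
  have cR: "card R = n" unfolding R_def
    using ry by (rule rootfun_card)
  define P where "P = opol w n"
  have P: "P = pr R" unfolding P_def R_def by (rule rootfun_pr[OF ry])
  have Proot: "\<And>r. r \<in> R \<Longrightarrow> poly P r = 0" unfolding P poly_pr using fin by auto
  have Pnz: "P \<noteq> 0" unfolding P_def by simp
  define q where "q = f div P"
  define s where "s = f mod P"
  have fe: "f = P * q + s" unfolding q_def s_def using div_mult_mod_eq[of f P] by (simp add: mult.commute)
  have ls: "lowdeg s n"
  proof -
    have "s = 0 \<or> degree s < degree P" using degree_mod_less[OF Pnz, of f] unfolding s_def by simp
    then show ?thesis unfolding lowdeg_degree P_def by simp
  qed
  have lq: "lowdeg q n"
  proof (cases "q = 0")
    case True then show ?thesis by (simp add: lowdeg_def)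
  next
    case False
    show ?thesis
    proof (rule ccontr)
      assume "\<not> lowdeg q n"
      then have dq: "degree q \<ge> n" using False lowdeg_degree by auto
      have dPq: "degree (P * q) = n + degree q" using Pnz False unfolding P_def by (simp add: degree_mult_eq)
      have ds: "s = 0 \<or> degree s < n" using ls lowdeg_degree by auto
      have big: "degree (P * q) \<ge> 2 * n" using dPq dq by simp
      have fdeg: "degree f = degree (P * q)"
      proof (cases "s = 0")
        case True then show ?thesis unfolding fe by simp
      next
        case False
        then have "degree s < degree (P * q)" using ds dPq by simp
        then show ?thesis unfolding fe by (rule degree_add_eq_left)
      qed
      have "f = 0 \<or> degree f < 2 * n" using f lowdeg_degree by auto
      then have "f = 0" using fdeg big by auto
      then have "P * q = - s" unfolding fe by (simp add: eq_neg_iff_add_eq_0)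
      then have e2: "degree (P * q) = degree s" by simp
      show False
      proof (cases "s = 0")
        case True
        then have "P * q = 0" using \<open>P * q = - s\<close> by simp
        then show False using Pnz \<open>q \<noteq> 0\<close> by simp
      next
        case False
        then show False using ds e2 dPq by simp
      qed
    qed
  qed
  have "ipw w f 1 = ipw w (P * q) 1 + ipw w s 1" unfolding fe by (rule ipw_add1[OF c])
  also have "ipw w (P * q) 1 = 0" using ipw_mult[of w P q 1] opol_orth'[OF w lq] unfolding P_def by simp
  also have "s = (\<Sum>r\<in>R. smult (poly s r) (LL R r))" by (rule interp[OF fin]) (use ls cR in simp)
  also have "ipw w \<dots> 1 = (\<Sum>r\<in>R. poly s r * ipw w (LL R r) 1)"
    by (simp add: ipw_sum1[OF c] ipw_smult1)
  also have "\<dots> = (\<Sum>r\<in>R. poly f r * ipw w (LL R r) 1)"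
    by (intro sum.cong refl) (simp add: fe Proot)
  finally show ?thesis unfolding R_def by simp
qed

lemma weights_pos:
  assumes w: "goodw w" and ry: "rootfun w n y" and r: "r \<in> y ` {..<n}"
  shows "ipw w (LL (y ` {..<n}) r) 1 > 0"
proof -
  have c: "continuous_on {-1..1} w" using w goodw_def by auto
  define R where "R = y ` {..<n}"
  have fin: "finite R" unfolding R_def by simp
  have cR: "card R = n" unfolding R_def
    using ry by (rule rootfun_card)
  have rR: "r \<in> R" using r R_def by simp
  have n: "n \<ge> 1" using r by auto
  define L where "L = LL R r"
  have lL: "lowdeg L n" unfolding L_def using LL_facts(2)[OF fin rR] cR by simp
  have "lowdeg (L * L - L) (2 * n)"
  proof -
    obtain k where k: "n = Suc k" using n by (metis Suc_le_D One_nat_def)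
    have "lowdeg (L * L) (Suc (k + k))" using lowdeg_mult[of L k L k] lL k by simp
    then show ?thesis using lowdeg_mono[OF lL, of "2 * n"] k
      by (intro lowdeg_diff) (auto intro: lowdeg_mono)
  qed
  from quadrature[OF w ry this]
  have "ipw w (L * L - L) 1 = (\<Sum>t\<in>R. poly (L * L - L) t * ipw w (LL R t) 1)" unfolding R_def by simp
  also have "\<dots> = 0" using LL_facts(1)[OF fin rR] unfolding L_def by (intro sum.neutral) auto
  finally have "ipw w (L * L) 1 = ipw w L 1" by (simp add: ipw_diff1[OF c])
  moreover have "ipw w (L * L) 1 = ipw w L L" using ipw_mult[of w L L 1] by simp
  moreover have "ipw w L L > 0" using ipw_pos[OF w] LL_facts(3)[OF fin rR] unfolding L_def by simp
  ultimately show ?thesis unfolding L_def R_def by simp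
qed


lemma one_plus_pos:
  fixes a x :: real
  assumes "a \<in> {-1<..<1}" "x \<in> {-1..1}"
  shows "1 + a * x > 0"
proof -
  have "\<bar>a * x\<bar> = \<bar>a\<bar> * \<bar>x\<bar>" by (simp add: abs_mult)
  also have "\<dots> \<le> \<bar>a\<bar>" using assms by (intro mult_left_le) auto
  also have "\<dots> < 1" using assms by auto
  finally show ?thesis by linarith
qed

lemma goodw_omt: "a \<in> {-1<..<1} \<Longrightarrow> goodw (omt a)"
  unfolding goodw_def omt_def
  using one_plus_pos[of a]
  by (auto intro!: continuous_intros simp: less_imp_neq[symmetric] dest: one_plus_pos)

lemma goodw_om: "a \<in> {-1<..<1} \<Longrightarrow> goodw (om a)"
  unfolding goodw_def om_def
  using one_plus_pos[of a]
  by (auto intro!: continuous_intros simp: less_imp_neq[symmetric] dest: one_plus_pos)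

lemma lam_eq:
  assumes a: "a \<in> {-1<..<1}" and ry: "rootfun (omt a) n y" and k: "k < n"
  shows "lam a n k = y k"
proof -
  have "lam a n k = sorted_list_of_set (y ` {..<n}) ! k"
    unfolding lam_def mop_opol[OF goodw_omt[OF a]] using ry rootfun_def by simp
  also have "\<dots> = y k" using sl_strict[of n y] ry k unfolding rootfun_def by simp
  finally show ?thesis .
qed

lemma part2:
  assumes a: "a \<in> {-1<..<1}" and k: "k < N"
  shows "lam a (N+1) k < lam a N k \<and> lam a N k < lam a (N+1) (k+1)"
proof -
  obtain xs ys where r: "rootfun (omt a) N xs" "rootfun (omt a) (Suc N) ys"
    "\<forall>k<N. ys k < xs k \<and> xs k < ys (Suc k)"
    using opol_roots_all[OF goodw_omt[OF a]] by blast
  show ?thesis using r k lam_eq[OF a r(1), of k] lam_eq[OF a r(2), of k] lam_eq[OF a r(2), of "Suc k"] by simp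
qed

lemma int_mu_om:
  assumes a: "a \<in> {-1<..<1}"
  shows "integral {-1..1} (\<lambda>\<mu>. \<mu> * om a \<mu>) = ipw (omt a) (pCons 0 1) [:1, a:]"
    "integral {-1..1} (om a) = ipw (omt a) 1 [:1, a:]"
proof -
  have e: "\<And>\<mu>. \<mu> \<in> {-1..1} \<Longrightarrow> om a \<mu> = (1 + a * \<mu>) * omt a \<mu>"
  proof -
    fix \<mu> :: real assume "\<mu> \<in> {-1..1}"
    then have "1 + a * \<mu> \<noteq> 0" using one_plus_pos[OF a] by (metis less_irrefl)
    moreover have h5: "(1 + a * \<mu>) ^ 5 = (1 + a * \<mu>) * (1 + a * \<mu>) ^ 4" by (simp add: eval_nat_numeral)
    ultimately show "om a \<mu> = (1 + a * \<mu>) * omt a \<mu>" unfolding om_def omt_def h5 by simp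
  qed
  show "integral {-1..1} (\<lambda>\<mu>. \<mu> * om a \<mu>) = ipw (omt a) (pCons 0 1) [:1, a:]"
    unfolding ipw_def by (intro integral_cong) (simp add: e algebra_simps)
  show "integral {-1..1} (om a) = ipw (omt a) 1 [:1, a:]"
    unfolding ipw_def by (intro integral_cong) (simp add: e algebra_simps)
qed

lemma int_om_pos:
  assumes a: "a \<in> {-1<..<1}"
  shows "integral {-1..1} (om a) > 0"
  using posint[OF goodw_om[OF a], of 1] by simp

lemma part3:
  assumes a: "a \<in> {-1<..<1}" and N: "N \<ge> 1"
  shows "lam a (N+1) 0 < integral {-1..1} (\<lambda>\<mu>. \<mu> * om a \<mu>) / integral {-1..1} (om a)
       \<and> integral {-1..1} (\<lambda>\<mu>. \<mu> * om a \<mu>) / integral {-1..1} (om a) < lam a (N+1) N"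
proof -
  define w where "w = omt a"
  have w: "goodw w" unfolding w_def by (rule goodw_omt[OF a])
  have c: "continuous_on {-1..1} w" using w goodw_def by auto
  obtain xs ys where r: "rootfun w (Suc N) xs"
    using opol_roots_all[OF w, of "Suc N"] by blast
  define R where "R = xs ` {..<Suc N}"
  have xsm: "strict_mono_on {..<Suc N} xs" using r rootfun_def by auto
  have l0: "lam a (N+1) 0 = xs 0" using lam_eq[OF a r[unfolded w_def], of 0] by simp
  have lN: "lam a (N+1) N = xs N" using lam_eq[OF a r[unfolded w_def], of N] by simp
  have x0N: "xs 0 < xs N" using xsm N by (auto simp: strict_mono_on_def)
  have rng: "\<And>t. t \<in> R \<Longrightarrow> xs 0 \<le> t \<and> t \<le> xs N"
  proof -
    fix t assume "t \<in> R"
    then obtain i where i: "i < Suc N" "t = xs i" unfolding R_def by auto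
    have "i = 0 \<or> xs 0 < xs i" using xsm i by (auto simp: strict_mono_on_def)
    then have "xs 0 \<le> xs i" by auto
    moreover have "xs i \<le> xs N"
    proof (cases "i = N")
      case False
      then have "i < N" using i by simp
      then show ?thesis using strict_mono_onD[OF xsm, of i N] by simp
    qed simp
    ultimately show "xs 0 \<le> t \<and> t \<le> xs N" using i by simp
  qed
  have rin: "\<And>t. t \<in> R \<Longrightarrow> 1 + a * t > 0"
  proof -
    fix t assume "t \<in> R"
    then have "poly (opol w (Suc N)) t = 0" using r unfolding R_def rootfun_def by auto
    then have "-1 < t \<and> t < 1" using root_in[OF w] by blast
    then show "1 + a * t > 0" using one_plus_pos[OF a, of t] by auto
  qed
  have Wpos: "\<And>t. t \<in> R \<Longrightarrow> ipw w (LL R t) 1 > 0" unfolding R_def by (rule weights_pos[OF w r])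
  define A where "A = integral {-1..1} (\<lambda>\<mu>. \<mu> * om a \<mu>)"
  define B where "B = integral {-1..1} (om a)"
  have B: "B > 0" unfolding B_def by (rule int_om_pos[OF a])
  have key: "\<And>cc. A - cc * B = (\<Sum>t\<in>R. ((t - cc) * (1 + a * t)) * ipw w (LL R t) 1)"
  proof -
    fix cc :: real
    define f where "f = [:-cc, 1:] * [:1, a:]"
    have "lowdeg [:-cc, 1:] (Suc 1)" "lowdeg [:1, a:] (Suc 1)" by (auto simp: lowdeg_def coeff_pCons split: nat.splits)
    then have "lowdeg f (Suc (1 + 1))" unfolding f_def by (intro lowdeg_mult)
    then have lf: "lowdeg f (2 * Suc N)" by (rule lowdeg_mono) (use N in simp)
    have e: "[:-cc, 1:] = pCons 0 1 - smult cc 1" by simp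
    have e2: "ipw w [:-cc, 1:] [:1, a:] = A - cc * B"
      unfolding e A_def B_def int_mu_om[OF a] w_def by (simp only: ipw_diff1[OF c[unfolded w_def]] ipw_smult1)
    have "A - cc * B = ipw w f 1" unfolding f_def e2[symmetric] using ipw_mult[of w "[:-cc,1:]" "[:1,a:]" 1] by simp
    also have "\<dots> = (\<Sum>t\<in>R. poly f t * ipw w (LL R t) 1)" unfolding R_def by (rule quadrature[OF w r lf])
    also have "\<dots> = (\<Sum>t\<in>R. ((t - cc) * (1 + a * t)) * ipw w (LL R t) 1)"
      unfolding f_def by (intro sum.cong refl) (simp add: algebra_simps)
    finally show "A - cc * B = (\<Sum>t\<in>R. ((t - cc) * (1 + a * t)) * ipw w (LL R t) 1)" .
  qed
  have NR: "xs N \<in> R" "xs 0 \<in> R" unfolding R_def by auto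
  have "A - xs 0 * B > 0" unfolding key
  proof (rule sum_pos2[OF _ NR(1)])
    show "finite R" unfolding R_def by simp
    show "0 < (xs N - xs 0) * (1 + a * xs N) * ipw w (LL R (xs N)) 1"
      using x0N rin[OF NR(1)] Wpos[OF NR(1)] by simp
    fix t assume "t \<in> R"
    then show "0 \<le> (t - xs 0) * (1 + a * t) * ipw w (LL R t) 1"
      using rng rin Wpos by (simp add: less_imp_le)
  qed
  then have lo: "xs 0 < A / B" using B by (simp add: pos_less_divide_eq)
  have "xs N * B - A > 0"
  proof -
    have "- (A - xs N * B) > 0" unfolding key sum_negf[symmetric]
    proof (rule sum_pos2[OF _ NR(2)])
      show "finite R" unfolding R_def by simp
      show "0 < - ((xs 0 - xs N) * (1 + a * xs 0) * ipw w (LL R (xs 0)) 1)"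
        using x0N rin[OF NR(2)] Wpos[OF NR(2)] by (simp add: mult_neg_pos)
      fix t assume "t \<in> R"
      then show "0 \<le> - ((t - xs N) * (1 + a * t) * ipw w (LL R t) 1)"
        using rng[of t] rin[of t] Wpos[of t] by (simp add: mult_nonpos_nonneg)
    qed
    then show ?thesis by simp
  qed
  then have hi: "A / B < xs N" using B by (simp add: pos_divide_less_eq)
  show ?thesis using lo hi l0 lN unfolding A_def B_def by simp
qed

lemma moment_eq:
  assumes a: "a \<in> {-1<..<1}"
  shows "moment a N f k = (\<Sum>i\<le>N. f i * ipw (om a) (opol (om a) i) (monom 1 k))"
proof -
  have w: "goodw (om a)" by (rule goodw_om[OF a])
  have c: "continuous_on {-1..1} (om a)" using w goodw_def by auto
  have "moment a N f k = integral {-1..1} (\<lambda>\<mu>. \<Sum>i\<le>N. f i * (poly (opol (om a) i) \<mu> * poly (monom 1 k) \<mu> * om a \<mu>))"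
    unfolding moment_def ansatz_def mop_opol[OF w]
    by (simp add: sum_distrib_left poly_monom algebra_simps)
  also have "\<dots> = (\<Sum>i\<le>N. integral {-1..1} (\<lambda>\<mu>. f i * (poly (opol (om a) i) \<mu> * poly (monom 1 k) \<mu> * om a \<mu>)))"
    by (rule integral_sum) (simp, rule integrable_continuous_interval, intro continuous_intros c)
  also have "\<dots> = (\<Sum>i\<le>N. f i * ipw (om a) (opol (om a) i) (monom 1 k))"
    unfolding ipw_def by simp
  finally show ?thesis .
qed

lemma sum_only0:
  fixes N :: nat
  assumes "\<And>i. i \<le> N \<Longrightarrow> i \<noteq> 0 \<Longrightarrow> g i = (0::real)"
  shows "(\<Sum>i\<le>N. g i) = g 0"
proof -
  have "(\<Sum>i\<le>N. g i) = g 0 + (\<Sum>i\<in>{..N} - {0}. g i)" by (rule sum.remove) auto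
  also have "(\<Sum>i\<in>{..N} - {0}. g i) = 0" using assms by (intro sum.neutral) auto
  finally show ?thesis by simp
qed

lemma part3b:
  assumes a: "a \<in> {-1<..<1}" and f: "f 0 \<noteq> 0" "f 1 = 0"
  shows "moment a N f 1 / moment a N f 0 = integral {-1..1} (\<lambda>\<mu>. \<mu> * om a \<mu>) / integral {-1..1} (om a)"
proof -
  have w: "goodw (om a)" by (rule goodw_om[OF a])
  have m0: "moment a N f 0 = f 0 * integral {-1..1} (om a)"
  proof -
    have "moment a N f 0 = (\<Sum>i\<le>N. f i * ipw (om a) (opol (om a) i) (monom 1 0))" by (rule moment_eq[OF a])
    also have "\<dots> = f 0 * ipw (om a) (opol (om a) 0) (monom 1 0)"
    proof (rule sum_only0)
      fix i assume "i \<le> N" "i \<noteq> 0"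
      then have "lowdeg (monom 1 0) i" by (auto simp: lowdeg_def coeff_monom)
      then show "f i * ipw (om a) (opol (om a) i) (monom 1 0) = 0" using opol_orth'[OF w] by simp
    qed
    also have "ipw (om a) (opol (om a) 0) (monom 1 0) = integral {-1..1} (om a)"
      unfolding ipw_def by simp
    finally show ?thesis .
  qed
  have m1: "moment a N f 1 = f 0 * integral {-1..1} (\<lambda>\<mu>. \<mu> * om a \<mu>)"
  proof -
    have "moment a N f 1 = (\<Sum>i\<le>N. f i * ipw (om a) (opol (om a) i) (monom 1 1))" by (rule moment_eq[OF a])
    also have "\<dots> = f 0 * ipw (om a) (opol (om a) 0) (monom 1 1)"
    proof (rule sum_only0)
      fix i assume "i \<le> N" "i \<noteq> 0"
      show "f i * ipw (om a) (opol (om a) i) (monom 1 1) = 0"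
      proof (cases "i = 1")
        case True then show ?thesis using f by simp
      next
        case False
        then have "lowdeg (monom 1 1) i" using \<open>i \<noteq> 0\<close> by (auto simp: lowdeg_def coeff_monom)
        then show ?thesis using opol_orth'[OF w] by simp
      qed
    qed
    also have "ipw (om a) (opol (om a) 0) (monom 1 1) = integral {-1..1} (\<lambda>\<mu>. \<mu> * om a \<mu>)"
      unfolding ipw_def by (simp add: poly_monom)
    finally show ?thesis .
  qed
  show ?thesis unfolding m0 m1 using f by simp
qed


definition mom :: "nat \<Rightarrow> real \<Rightarrow> real" where
  "mom j b = integral {-1..1} (\<lambda>x. x ^ j * omt b x)"

definition dW :: "real \<Rightarrow> real \<Rightarrow> real" where
  "dW b x = -5 * x / (1 + b * x) ^ 6"

lemma omt_deriv:
  fixes b t :: real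
  assumes "1 + b * t \<noteq> 0"
  shows "((\<lambda>b. omt b t) has_real_derivative dW b t) (at b within S)"
proof -
  have "((\<lambda>b. 1 / (1 + b * t) ^ 5) has_real_derivative (- (5 * (1 + b * t) ^ 4 * t) / ((1 + b * t) ^ 5) ^ 2)) (at b within S)"
    using assms by (auto intro!: derivative_eq_intros)
  moreover have "- (5 * (1 + b * t) ^ 4 * t) / ((1 + b * t) ^ 5) ^ 2 = dW b t"
  proof -
    define u where "u = 1 + b * t"
    have u: "u \<noteq> 0" using assms u_def by simp
    have "(u ^ 5) ^ 2 = u ^ 4 * u ^ 6" by (simp add: power_add[symmetric] power_mult[symmetric])
    then have "- (5 * u ^ 4 * t) / (u ^ 5) ^ 2 = -5 * t / u ^ 6" using u by (simp add: field_simps)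
    then show ?thesis unfolding dW_def u_def by simp
  qed
  ultimately show ?thesis unfolding omt_def by simp
qed

lemma mom_deriv:
  assumes a: "a \<in> {-1<..<1}"
  shows "((\<lambda>b. mom j b) has_real_derivative integral {-1..1} (\<lambda>x. x ^ j * dW a x)) (at a)"
proof -
  let ?U = "{-1<..<1::real}"
  have nz: "\<And>b t. b \<in> ?U \<Longrightarrow> t \<in> {-1..1} \<Longrightarrow> 1 + b * t \<noteq> 0"
    using one_plus_pos by (metis less_irrefl)
  have "((\<lambda>b. integral (cbox (-1) 1) (\<lambda>t. t ^ j * omt b t)) has_real_derivative
          integral (cbox (-1) 1) (\<lambda>t. t ^ j * dW a t)) (at a within ?U)"
  proof (rule leibniz_rule_field_derivative[where fx = "\<lambda>b t. t ^ j * dW b t"])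
    fix b t assume b: "b \<in> ?U" and t: "t \<in> cbox (-1::real) 1"
    show "((\<lambda>b. t ^ j * omt b t) has_real_derivative t ^ j * dW b t) (at b within ?U)"
      using omt_deriv[OF nz[OF b], where S = ?U] t by (auto intro!: derivative_eq_intros)
  next
    fix b assume b: "b \<in> ?U"
    have "continuous_on {-1..1} (\<lambda>t. t ^ j * omt b t)"
      using goodw_omt[OF b] unfolding goodw_def by (intro continuous_intros) auto
    then show "(\<lambda>t. t ^ j * omt b t) integrable_on cbox (-1) 1"
      by (simp add: integrable_continuous_interval)
  next
    have "continuous_on (?U \<times> {-1..1}) (\<lambda>z. snd z ^ j * (-5 * snd z / (1 + fst z * snd z) ^ 6))"
      using nz by (intro continuous_intros) auto
    then show "continuous_on (?U \<times> cbox (-1) 1) (\<lambda>(b, t). t ^ j * dW b t)"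
      unfolding dW_def by (simp add: case_prod_beta')
  qed (use a in auto)
  then show ?thesis unfolding mom_def using at_within_open[of a ?U] a by simp
qed

lemma poly_sum_le:
  fixes p :: "real poly"
  assumes "degree p \<le> m"
  shows "poly p x = (\<Sum>i\<le>m. coeff p i * x ^ i)"
proof -
  have "(\<Sum>i\<le>m. coeff p i * x ^ i) = (\<Sum>i\<le>degree p. coeff p i * x ^ i)"
    using assms by (intro sum.mono_neutral_right) (auto simp: coeff_eq_0)
  then show ?thesis by (simp add: poly_altdef)
qed

lemma ipw_expand:
  assumes g: "continuous_on {-1..1} g" and dp: "degree p \<le> dp" and dq: "degree q \<le> dq"
  shows "ipw g p q = (\<Sum>i\<le>dp. \<Sum>j\<le>dq. coeff p i * coeff q j * integral {-1..1} (\<lambda>x. x ^ (i + j) * g x))"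
proof -
  have pt: "\<And>x. poly p x * poly q x * g x = (\<Sum>i\<le>dp. \<Sum>j\<le>dq. coeff p i * coeff q j * (x ^ (i + j) * g x))"
  proof -
    fix x :: real
    have "poly p x * poly q x * g x = (\<Sum>i\<le>dp. \<Sum>j\<le>dq. (coeff p i * x ^ i) * (coeff q j * x ^ j)) * g x"
      unfolding poly_sum_le[OF dp] poly_sum_le[OF dq] sum_product ..
    also have "\<dots> = (\<Sum>i\<le>dp. \<Sum>j\<le>dq. coeff p i * coeff q j * (x ^ (i + j) * g x))"
      unfolding sum_distrib_right by (intro sum.cong refl) (simp add: power_add algebra_simps)
    finally show "poly p x * poly q x * g x = (\<Sum>i\<le>dp. \<Sum>j\<le>dq. coeff p i * coeff q j * (x ^ (i + j) * g x))" .
  qed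
  have ic: "\<And>m. (\<lambda>x. x ^ m * g x) integrable_on {-1..1}"
    by (rule integrable_continuous_interval) (intro continuous_intros g)
  have "ipw g p q = integral {-1..1} (\<lambda>x. \<Sum>i\<le>dp. \<Sum>j\<le>dq. coeff p i * coeff q j * (x ^ (i + j) * g x))"
    unfolding ipw_def pt ..
  also have "\<dots> = (\<Sum>i\<le>dp. integral {-1..1} (\<lambda>x. \<Sum>j\<le>dq. coeff p i * coeff q j * (x ^ (i + j) * g x)))"
    by (rule integral_sum) (auto intro!: integrable_sum integrable_on_mult_right ic)
  also have "\<dots> = (\<Sum>i\<le>dp. \<Sum>j\<le>dq. integral {-1..1} (\<lambda>x. coeff p i * coeff q j * (x ^ (i + j) * g x)))"
    by (intro sum.cong refl integral_sum) (auto intro!: integrable_on_mult_right ic)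
  also have "\<dots> = (\<Sum>i\<le>dp. \<Sum>j\<le>dq. coeff p i * coeff q j * integral {-1..1} (\<lambda>x. x ^ (i + j) * g x))"
    by (simp add: integral_mult_right)
  finally show ?thesis .
qed

lemma deriv_diff: "(f has_real_derivative D) (at a) \<Longrightarrow> f differentiable (at a)"
  using DERIV_imp_deriv DERIV_deriv_iff_real_differentiable by metis

lemma diff_transform_open:
  fixes f g :: "real \<Rightarrow> real"
  assumes "f differentiable (at a)" "open S" "a \<in> S" "\<And>x. x \<in> S \<Longrightarrow> f x = g x"
  shows "g differentiable (at a)"
proof -
  have "(f has_real_derivative deriv f a) (at a)" using assms(1) DERIV_deriv_iff_real_differentiable by blast
  then have "(g has_real_derivative deriv f a) (at a)"
    by (rule has_field_derivative_transform_within_open) (use assms in auto)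
  then show ?thesis by (rule deriv_diff)
qed

lemma mom_diff: "a \<in> {-1<..<1} \<Longrightarrow> (\<lambda>b. mom j b) differentiable (at a)"
  using mom_deriv deriv_diff by blast

lemma ipw_family_diff:
  assumes a: "a \<in> {-1<..<1}"
    and cP: "\<And>i. (\<lambda>b. coeff (Pf b) i) differentiable (at a)"
    and cQ: "\<And>i. (\<lambda>b. coeff (Qf b) i) differentiable (at a)"
    and dP: "\<And>b. degree (Pf b) \<le> dp" and dQ: "\<And>b. degree (Qf b) \<le> dq"
  shows "(\<lambda>b. ipw (omt b) (Pf b) (Qf b)) differentiable (at a)"
proof (rule diff_transform_open)
  show "(\<lambda>b. \<Sum>i\<le>dp. \<Sum>j\<le>dq. coeff (Pf b) i * coeff (Qf b) j * mom (i + j) b) differentiable (at a)"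
    using cP cQ mom_diff[OF a] by (intro differentiable_sum ballI differentiable_mult) auto
  show "open {-1<..<1::real}" by simp
  show "a \<in> {-1<..<1}" by (rule a)
  fix b :: real assume b: "b \<in> {-1<..<1}"
  have c: "continuous_on {-1..1} (omt b)" using goodw_omt[OF b] goodw_def by auto
  show "(\<Sum>i\<le>dp. \<Sum>j\<le>dq. coeff (Pf b) i * coeff (Qf b) j * mom (i + j) b) = ipw (omt b) (Pf b) (Qf b)"
    unfolding ipw_expand[OF c dP dQ] mom_def ..
qed

lemma coeff_pCons_diff:
  assumes "\<And>i. (\<lambda>b. coeff (P b) i) differentiable (at a)"
  shows "(\<lambda>b. coeff (pCons 0 (P b)) i) differentiable (at a)"
  using assms by (cases i) auto

lemma coeff_opol_SS:
  "coeff (opol w (Suc (Suc m))) i =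
     coeff (pCons 0 (opol w (Suc m))) i
     - (ipw w (pCons 0 (opol w (Suc m))) (opol w (Suc m)) / ipw w (opol w (Suc m)) (opol w (Suc m))) * coeff (opol w (Suc m)) i
     - (ipw w (opol w (Suc m)) (opol w (Suc m)) / ipw w (opol w m) (opol w m)) * coeff (opol w m) i"
  by (simp only: opol.simps coeff_diff coeff_smult)

lemma coeff_opol_1:
  "coeff (opol w (Suc 0)) i = coeff (pCons 0 1) i - (ipw w (pCons 0 1) 1 / ipw w 1 1) * coeff 1 i"
  by (simp only: opol.simps coeff_diff coeff_smult)

lemma coeff_opol_diff:
  assumes a: "a \<in> {-1<..<1}"
  shows "(\<lambda>b. coeff (opol (omt b) m) i) differentiable (at a)"
proof -
  have pos: "\<And>m. ipw (omt a) (opol (omt a) m) (opol (omt a) m) \<noteq> 0"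
    using ipw_pos[OF goodw_omt[OF a]] by (metis less_irrefl opol_nz)
  have "(\<forall>i. (\<lambda>b. coeff (opol (omt b) m) i) differentiable (at a)) \<and>
        (\<forall>i. (\<lambda>b. coeff (opol (omt b) (Suc m)) i) differentiable (at a))"
  proof (induction m)
    case 0
    have c1: "\<And>i. (\<lambda>b. coeff (1::real poly) i) differentiable (at a)" by simp
    have c2: "\<And>i. (\<lambda>b. coeff (pCons 0 (1::real poly)) i) differentiable (at a)" by simp
    have d1: "(\<lambda>b. ipw (omt b) (pCons 0 1) 1) differentiable (at a)"
      by (rule ipw_family_diff[OF a c2 c1, of 1 0]) simp_all
    have d2: "(\<lambda>b. ipw (omt b) 1 1) differentiable (at a)"
      by (rule ipw_family_diff[OF a c1 c1, of 0 0]) simp_all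
    have "ipw (omt a) 1 1 \<noteq> 0" using pos[of 0] by simp
    then have "\<And>i. (\<lambda>b. coeff (opol (omt b) (Suc 0)) i) differentiable (at a)"
      unfolding coeff_opol_1 using d1 d2 by (intro differentiable_diff differentiable_mult differentiable_divide) auto
    then show ?case by simp
  next
    case (Suc m)
    have h0: "\<And>i. (\<lambda>b. coeff (opol (omt b) m) i) differentiable (at a)" using Suc by blast
    have h1: "\<And>i. (\<lambda>b. coeff (opol (omt b) (Suc m)) i) differentiable (at a)" using Suc by blast
    have h1x: "\<And>i. (\<lambda>b. coeff (pCons 0 (opol (omt b) (Suc m))) i) differentiable (at a)"
      by (rule coeff_pCons_diff[OF h1])
    have dx: "\<And>b. degree (pCons 0 (opol (omt b) (Suc m))) \<le> Suc (Suc m)" by simp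
    have e1: "(\<lambda>b. ipw (omt b) (pCons 0 (opol (omt b) (Suc m))) (opol (omt b) (Suc m))) differentiable (at a)"
      by (rule ipw_family_diff[OF a h1x h1 dx, of "Suc m"]) simp
    have e2: "(\<lambda>b. ipw (omt b) (opol (omt b) (Suc m)) (opol (omt b) (Suc m))) differentiable (at a)"
      by (rule ipw_family_diff[OF a h1 h1, of "Suc m" "Suc m"]) simp_all
    have e3: "(\<lambda>b. ipw (omt b) (opol (omt b) m) (opol (omt b) m)) differentiable (at a)"
      by (rule ipw_family_diff[OF a h0 h0, of m m]) simp_all
    have "\<And>i. (\<lambda>b. coeff (opol (omt b) (Suc (Suc m))) i) differentiable (at a)"
      unfolding coeff_opol_SS using e1 e2 e3 h0 h1 h1x pos[of m] pos[of "Suc m"]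
      by (intro differentiable_diff differentiable_mult differentiable_divide) auto
    then show ?case using h1 by blast
  qed
  then show ?thesis by blast
qed


lemma coeff_cont:
  assumes a: "a \<in> {-1<..<1}"
  shows "((\<lambda>b. coeff (opol (omt b) n) i) \<longlongrightarrow> coeff (opol (omt a) n) i) (at a)"
  using differentiable_imp_continuous_within[OF coeff_opol_diff[OF a, of n i]]
  by (simp add: isCont_def)

lemma polyP_eq: "poly (opol w n) x = (\<Sum>i\<le>n. coeff (opol w n) i * x ^ i)"
  by (rule poly_sum_le) simp

lemma polyP_cont:
  assumes a: "a \<in> {-1<..<1}"
  shows "((\<lambda>b. poly (opol (omt b) n) x) \<longlongrightarrow> poly (opol (omt a) n) x) (at a)"
  unfolding polyP_eq by (intro tendsto_intros coeff_cont[OF a])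

lemma ev_in_U:
  assumes a: "a \<in> {-1<..<1::real}"
  shows "eventually (\<lambda>b. b \<in> {-1<..<1::real}) (at a)"
  using topological_tendstoD[OF tendsto_ident_at, of "{-1<..<1::real}" a] a by simp

lemma QQ_roots:
  assumes "finite R" "r \<in> R"
  shows "poly (QQ R r) x = 0 \<longleftrightarrow> x \<in> R - {r}"
  unfolding QQ_def poly_pr using assms by auto

lemma root_cont:
  assumes a: "a \<in> {-1<..<1}" and ry: "rootfun (omt a) n y" and k: "k < n" and eps: "\<epsilon> > 0"
  shows "eventually (\<lambda>b. b \<in> {-1<..<1} \<and> (\<exists>z. rootfun (omt b) n z \<and> \<bar>z k - y k\<bar> < \<epsilon>)) (at a)"
proof -
  have ym: "strict_mono_on {..<n} y" using ry rootfun_def by auto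
  define D where "D = insert \<epsilon> ((\<lambda>j. y (Suc j) - y j) ` {j. Suc j < n})"
  have "{j. Suc j < n} \<subseteq> {..<n}" by auto
  then have "finite {j. Suc j < n}" by (rule finite_subset) simp
  then have Dfin: "finite D" unfolding D_def by simp
  have Dpos: "\<And>d. d \<in> D \<Longrightarrow> d > 0"
    unfolding D_def using eps strict_mono_onD[OF ym] by auto
  define e where "e = Min D / 3"
  have epos: "e > 0" unfolding e_def using Dpos Min_in[OF Dfin] D_def by auto
  have eeps: "e < \<epsilon>" unfolding e_def using Min_le[OF Dfin, of \<epsilon>] eps D_def by auto
  have egap: "\<And>j. Suc j < n \<Longrightarrow> 3 * e \<le> y (Suc j) - y j"
    unfolding e_def using Min_le[OF Dfin] D_def by auto
  have sep: "\<And>i j. i < j \<Longrightarrow> j < n \<Longrightarrow> y i + 3 * e \<le> y j"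
  proof -
    fix i j assume ij: "i < j" "j < n"
    have "y (Suc i) \<le> y j"
    proof (cases "Suc i = j")
      case False
      then show ?thesis using strict_mono_onD[OF ym, of "Suc i" j] ij by simp
    qed simp
    then show "y i + 3 * e \<le> y j" using egap[of i] ij by simp
  qed
  define R where "R = y ` {..<n}"
  have Rfin: "finite R" unfolding R_def by simp
  have Pa: "opol (omt a) n = pr R" unfolding R_def by (rule rootfun_pr[OF ry])
  have sign_a: "\<And>j. j < n \<Longrightarrow> poly (opol (omt a) n) (y j - e) * poly (opol (omt a) n) (y j + e) < 0"
  proof -
    fix j assume j: "j < n"
    have yR: "y j \<in> R" unfolding R_def using j by simp
    define h where "h = QQ R (y j)"
    have Pe: "opol (omt a) n = [:-y j, 1:] * h" unfolding Pa h_def by (rule QQ_facts(3)[OF Rfin yR])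
    have hnz: "\<And>x. \<bar>x - y j\<bar> \<le> e \<Longrightarrow> poly h x \<noteq> 0"
    proof
      fix x assume x: "\<bar>x - y j\<bar> \<le> e" and "poly h x = 0"
      then have "x \<in> R - {y j}" unfolding h_def using QQ_roots[OF Rfin yR] by simp
      then obtain i where i: "i < n" "x = y i" "i \<noteq> j" unfolding R_def by auto
      have "3 * e \<le> \<bar>y i - y j\<bar>"
      proof (cases "i < j")
        case True then show ?thesis using sep[of i j] j by simp
      next
        case False then show ?thesis using sep[of j i] i by simp
      qed
      then show False using x i epos by simp
    qed
    have hpos: "poly h (y j - e) * poly h (y j + e) > 0"
    proof (rule ccontr)
      assume "\<not> ?thesis"
      moreover have "poly h (y j - e) \<noteq> 0" "poly h (y j + e) \<noteq> 0" using hnz epos by auto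
      ultimately have "poly h (y j - e) * poly h (y j + e) < 0" by (simp add: not_less le_less)
      then obtain x where "y j - e < x" "x < y j + e" "poly h x = 0"
        using poly_IVT[of "y j - e" "y j + e" h] epos by auto
      then show False using hnz[of x] by simp
    qed
    have "poly (opol (omt a) n) (y j - e) * poly (opol (omt a) n) (y j + e)
            = - (e * e) * (poly h (y j - e) * poly h (y j + e))"
      unfolding Pe by (simp add: algebra_simps)
    then show "poly (opol (omt a) n) (y j - e) * poly (opol (omt a) n) (y j + e) < 0"
      using hpos epos by (simp add: mult_neg_pos)
  qed
  have ev: "eventually (\<lambda>b. \<forall>j\<in>{..<n}. poly (opol (omt b) n) (y j - e) * poly (opol (omt b) n) (y j + e) < 0) (at a)"
  proof (rule eventually_ball_finite)
    show "finite {..<n}" by simp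
    show "\<forall>j\<in>{..<n}. eventually (\<lambda>b. poly (opol (omt b) n) (y j - e) * poly (opol (omt b) n) (y j + e) < 0) (at a)"
    proof
      fix j assume "j \<in> {..<n}"
      then show "eventually (\<lambda>b. poly (opol (omt b) n) (y j - e) * poly (opol (omt b) n) (y j + e) < 0) (at a)"
        using sign_a order_tendstoD(2)[OF tendsto_mult[OF polyP_cont[OF a] polyP_cont[OF a]]] by auto
    qed
  qed
  show ?thesis
    using eventually_conj[OF ev ev_in_U[OF a]]
  proof (rule eventually_mono)
    fix b assume b: "(\<forall>j\<in>{..<n}. poly (opol (omt b) n) (y j - e) * poly (opol (omt b) n) (y j + e) < 0) \<and> b \<in> {-1<..<1}"
    have ex: "\<forall>j\<in>{..<n}. \<exists>r. poly (opol (omt b) n) r = 0 \<and> y j - e < r \<and> r < y j + e"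
    proof
      fix j assume "j \<in> {..<n}"
      then have "poly (opol (omt b) n) (y j - e) * poly (opol (omt b) n) (y j + e) < 0" using b by blast
      then show "\<exists>r. poly (opol (omt b) n) r = 0 \<and> y j - e < r \<and> r < y j + e"
        using poly_IVT[of "y j - e" "y j + e"] epos by fastforce
    qed
    then obtain z where z: "\<And>j. j < n \<Longrightarrow> poly (opol (omt b) n) (z j) = 0 \<and> y j - e < z j \<and> z j < y j + e"
      using bchoice[OF ex] by auto
    have zm: "strict_mono_on {..<n} z"
    proof (rule strict_mono_onI)
      fix i j assume "i \<in> {..<n}" "j \<in> {..<n}" "i < j"
      then show "z i < z j" using z[of i] z[of j] sep[of i j] epos by auto
    qed
    have sub: "z ` {..<n} \<subseteq> {x. poly (opol (omt b) n) x = 0}" using z by auto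
    have cz: "card (z ` {..<n}) = n" using card_image[OF strict_mono_on_imp_inj_on[OF zm]] by simp
    have fin: "finite {x. poly (opol (omt b) n) x = 0}" by (rule poly_roots_finite) simp
    have "card {x. poly (opol (omt b) n) x = 0} \<le> n"
      using card_poly_roots_bound[of "opol (omt b) n"] by simp
    then have "z ` {..<n} = {x. poly (opol (omt b) n) x = 0}"
      using card_subset_eq[OF fin sub] cz card_mono[OF fin sub] by simp
    then have "rootfun (omt b) n z" unfolding rootfun_def using zm by simp
    moreover have "\<bar>z k - y k\<bar> < \<epsilon>" using z[OF k] eeps by auto
    ultimately show "b \<in> {-1<..<1} \<and> (\<exists>z. rootfun (omt b) n z \<and> \<bar>z k - y k\<bar> < \<epsilon>)" using b by blast
  qed
qed


lemma lam_deriv: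
  assumes a: "a \<in> {-1<..<1}" and ry: "rootfun (omt a) n y" and k: "k < n"
  shows "((\<lambda>b. lam b n k) has_real_derivative
           (- (\<Sum>i\<le>n. deriv (\<lambda>b. coeff (opol (omt b) n) i) a * y k ^ i) / poly (QQ (y ` {..<n}) (y k)) (y k))) (at a)"
proof -
  define x0 where "x0 = y k"
  define R where "R = y ` {..<n}"
  define h where "h = QQ R x0"
  define c where "c i b = coeff (opol (omt b) n) i" for i b
  define d where "d i = deriv (\<lambda>b. coeff (opol (omt b) n) i) a" for i
  define L where "L b = lam b n k" for b
  have Rfin: "finite R" unfolding R_def by simp
  have x0R: "x0 \<in> R" unfolding R_def x0_def using k by simp
  have La: "L a = x0" unfolding L_def x0_def by (rule lam_eq[OF a ry k])
  have hx0: "poly h x0 \<noteq> 0" unfolding h_def by (rule QQ_facts(1)[OF Rfin x0R])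
  have Pa: "\<And>x. poly (opol (omt a) n) x = (x - x0) * poly h x"
  proof -
    fix x
    have "opol (omt a) n = pr R" unfolding R_def by (rule rootfun_pr[OF ry])
    also have "\<dots> = [:-x0, 1:] * h" unfolding h_def by (rule QQ_facts(3)[OF Rfin x0R])
    finally have e: "opol (omt a) n = [:-x0, 1:] * h" .
    show "poly (opol (omt a) n) x = (x - x0) * poly h x" by (simp only: e poly_mult) simp
  qed
  have evroot: "\<And>\<epsilon>. \<epsilon> > 0 \<Longrightarrow> eventually (\<lambda>b. poly (opol (omt b) n) (L b) = 0 \<and> \<bar>L b - x0\<bar> < \<epsilon>) (at a)"
  proof -
    fix \<epsilon> :: real assume "\<epsilon> > 0"
    from root_cont[OF a ry k this]
    show "eventually (\<lambda>b. poly (opol (omt b) n) (L b) = 0 \<and> \<bar>L b - x0\<bar> < \<epsilon>) (at a)"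
    proof (rule eventually_mono)
      fix b assume "b \<in> {-1<..<1} \<and> (\<exists>z. rootfun (omt b) n z \<and> \<bar>z k - y k\<bar> < \<epsilon>)"
      then obtain z where b: "b \<in> {-1<..<1}" and z: "rootfun (omt b) n z" "\<bar>z k - y k\<bar> < \<epsilon>" by blast
      have "L b = z k" unfolding L_def by (rule lam_eq[OF b z(1) k])
      moreover have "poly (opol (omt b) n) (z k) = 0" using z k unfolding rootfun_def by auto
      ultimately show "poly (opol (omt b) n) (L b) = 0 \<and> \<bar>L b - x0\<bar> < \<epsilon>" using z unfolding x0_def by simp
    qed
  qed
  have Lt: "(L \<longlongrightarrow> x0) (at a)"
  proof (rule tendstoI)
    fix \<epsilon> :: real assume "\<epsilon> > 0"
    from evroot[OF this] show "eventually (\<lambda>b. dist (L b) x0 < \<epsilon>) (at a)"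
      by (rule eventually_mono) (simp add: dist_real_def)
  qed
  have ht: "((\<lambda>b. poly h (L b)) \<longlongrightarrow> poly h x0) (at a)"
    by (rule isCont_tendsto_compose[OF poly_isCont Lt])
  have hne: "eventually (\<lambda>b. poly h (L b) \<noteq> 0) (at a)"
    using tendsto_imp_eventually_ne[OF ht hx0] .
  have cd: "\<And>i. ((\<lambda>b. (c i b - c i a) / (b - a)) \<longlongrightarrow> d i) (at a)"
  proof -
    fix i
    have "((\<lambda>b. coeff (opol (omt b) n) i) has_real_derivative d i) (at a)"
      unfolding d_def using coeff_opol_diff[OF a] DERIV_deriv_iff_real_differentiable by blast
    then show "((\<lambda>b. (c i b - c i a) / (b - a)) \<longlongrightarrow> d i) (at a)"
      unfolding c_def has_field_derivative_iff .
  qed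
  have lim: "((\<lambda>b. - (\<Sum>i\<le>n. (c i b - c i a) / (b - a) * L b ^ i) / poly h (L b)) \<longlongrightarrow>
             - (\<Sum>i\<le>n. d i * x0 ^ i) / poly h x0) (at a)"
    by (intro tendsto_intros cd Lt ht hx0)
  have eq: "eventually (\<lambda>b. (L b - L a) / (b - a) = - (\<Sum>i\<le>n. (c i b - c i a) / (b - a) * L b ^ i) / poly h (L b)) (at a)"
    using eventually_conj[OF eventually_conj[OF evroot[OF zero_less_one] hne] eventually_neq_at_within[of a a UNIV]]
  proof (rule eventually_mono)
    fix b assume b: "((poly (opol (omt b) n) (L b) = 0 \<and> \<bar>L b - x0\<bar> < 1) \<and> poly h (L b) \<noteq> 0) \<and> b \<noteq> a"
    have s1: "(\<Sum>i\<le>n. c i b * L b ^ i) = 0" using b unfolding c_def polyP_eq[symmetric] by simp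
    have s2: "(\<Sum>i\<le>n. c i a * L b ^ i) = (L b - x0) * poly h (L b)" unfolding c_def polyP_eq[symmetric] Pa ..
    have "(\<Sum>i\<le>n. (c i b - c i a) / (b - a) * L b ^ i) = ((\<Sum>i\<le>n. c i b * L b ^ i) - (\<Sum>i\<le>n. c i a * L b ^ i)) / (b - a)"
      by (simp add: sum_divide_distrib sum_subtractf[symmetric] algebra_simps)
    also have "\<dots> = - ((L b - x0) * poly h (L b)) / (b - a)" unfolding s1 s2 by simp
    finally have "(\<Sum>i\<le>n. (c i b - c i a) / (b - a) * L b ^ i) = - ((L b - x0) * poly h (L b)) / (b - a)" .
    then show "(L b - L a) / (b - a) = - (\<Sum>i\<le>n. (c i b - c i a) / (b - a) * L b ^ i) / poly h (L b)"
      using b La by (simp add: field_simps)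
  qed
  have "(L has_real_derivative (- (\<Sum>i\<le>n. d i * x0 ^ i) / poly h x0)) (at a)"
    unfolding has_field_derivative_iff using tendsto_cong[OF eq] lim by simp
  then show ?thesis unfolding L_def d_def x0_def h_def R_def .
qed


lemma dW_cont: "a \<in> {-1<..<1} \<Longrightarrow> continuous_on {-1..1} (dW a)"
  unfolding dW_def using one_plus_pos[of a]
  by (intro continuous_intros) (auto simp: less_imp_neq[symmetric] dest: one_plus_pos)

lemma w6_good: "a \<in> {-1<..<1} \<Longrightarrow> goodw (\<lambda>x. 1 / (1 + a * x) ^ 6)"
  unfolding goodw_def using one_plus_pos[of a]
  by (auto intro!: continuous_intros simp: less_imp_neq[symmetric] dest: one_plus_pos)

lemma alg6:
  fixes u v x x0 t H :: real
  assumes u: "u \<noteq> 0" and v: "v \<noteq> 0" and k: "x0 * u + t = x * v"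
  shows "t * H * (-5 * x / u ^ 6) = (-5 * x0 / v) * (t * H * (1 / u ^ 5)) + (-5 / v) * (t * t * H * (1 / u ^ 6))"
proof -
  have "(-5 * x0 / v) * (t * H * (1 / u ^ 5)) + (-5 / v) * (t * t * H * (1 / u ^ 6)) = (-5 * t * H / (v * u ^ 6)) * (x0 * u + t)"
    using u v by (simp add: field_simps eval_nat_numeral)
  also have "\<dots> = (-5 * t * H / (v * u ^ 6)) * (x * v)" by (simp only: k)
  also have "\<dots> = t * H * (-5 * x / u ^ 6)" using u v by (simp add: field_simps)
  finally show ?thesis by simp
qed

lemma dW_part_neg:
  assumes a: "a \<in> {-1<..<1}" and x0: "-1 < x0" "x0 < 1" and h: "h \<noteq> 0"
    and P: "\<And>x. poly P x = (x - x0) * poly h x"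
    and orth: "ipw (omt a) P h = 0"
  shows "ipw (dW a) P h < 0"
proof -
  define \<kappa> where "\<kappa> = -5 * x0 / (1 + a * x0)"
  define \<mu> where "\<mu> = -5 / (1 + a * x0)"
  define S where "S = [:-x0, 1:] * [:-x0, 1:] * h * h"
  define w2 where "w2 x = 1 / (1 + a * x) ^ 6" for x
  have ax0: "1 + a * x0 > 0" using one_plus_pos[OF a, of x0] x0 by auto
  have pt: "\<And>x. x \<in> {-1..1} \<Longrightarrow> poly P x * poly h x * dW a x = \<kappa> * (poly P x * poly h x * omt a x) + \<mu> * (poly S x * w2 x)"
  proof -
    fix x :: real assume x: "x \<in> {-1..1}"
    have ax: "1 + a * x > 0" using one_plus_pos[OF a x] .
    have k: "x0 * (1 + a * x) + (x - x0) = x * (1 + a * x0)" by (simp add: algebra_simps)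
    have e1: "poly S x = (x - x0) * (x - x0) * (poly h x * poly h x)" unfolding S_def by (simp add: algebra_simps)
    have e2: "poly P x * poly h x = (x - x0) * (poly h x * poly h x)" unfolding P by (simp add: algebra_simps)
    show "poly P x * poly h x * dW a x = \<kappa> * (poly P x * poly h x * omt a x) + \<mu> * (poly S x * w2 x)"
      unfolding e1 e2 dW_def omt_def \<kappa>_def \<mu>_def w2_def
      by (rule alg6) (use ax ax0 k in auto)
  qed
  have c1: "continuous_on {-1..1} (omt a)" using goodw_omt[OF a] goodw_def by auto
  have w2g: "goodw w2" unfolding w2_def by (rule w6_good[OF a])
  have c2: "continuous_on {-1..1} w2" using w2g goodw_def by auto
  have "ipw (dW a) P h = integral {-1..1} (\<lambda>x. \<kappa> * (poly P x * poly h x * omt a x) + \<mu> * (poly S x * w2 x))"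
    unfolding ipw_def by (rule integral_cong) (rule pt)
  also have "\<dots> = \<kappa> * ipw (omt a) P h + \<mu> * integral {-1..1} (\<lambda>x. poly S x * w2 x)"
    unfolding ipw_def
    by (subst integral_add) (auto intro!: integrable_continuous_interval continuous_intros c1 c2 simp: integral_mult_right)
  also have "\<dots> = \<mu> * integral {-1..1} (\<lambda>x. poly S x * w2 x)" using orth by simp
  also have "\<dots> < 0"
  proof (rule mult_neg_pos)
    show "\<mu> < 0" unfolding \<mu>_def using ax0 by simp
    show "integral {-1..1} (\<lambda>x. poly S x * w2 x) > 0"
    proof (rule posint[OF w2g])
      show "S \<noteq> 0" unfolding S_def using h by (simp del: mult_pCons_left)
      fix x :: real
      have "poly S x = ((x - x0) * poly h x) * ((x - x0) * poly h x)" unfolding S_def by (simp add: algebra_simps)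
      then show "poly S x \<ge> 0" by simp
    qed
  qed
  finally show ?thesis .
qed

definition dcf :: "real \<Rightarrow> nat \<Rightarrow> nat \<Rightarrow> real" where
  "dcf a n i = deriv (\<lambda>b. coeff (opol (omt b) n) i) a"

definition DP :: "real \<Rightarrow> nat \<Rightarrow> real poly" where
  "DP a n = (\<Sum>i\<le>n. monom (dcf a n i) i)"

lemma dcf_n: "dcf a n n = 0"
proof -
  have "(\<lambda>b. coeff (opol (omt b) n) n) = (\<lambda>b. 1)" using opol_coeff by auto
  then show ?thesis unfolding dcf_def using DERIV_imp_deriv[OF DERIV_const] by simp
qed

lemma coeff_DP: "coeff (DP a n) j = (if j \<le> n then dcf a n j else 0)"
  unfolding DP_def by (simp add: coeff_sum coeff_monom)

lemma lowdeg_DP: "lowdeg (DP a n) n"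
  unfolding lowdeg_def coeff_DP using dcf_n by auto

lemma degree_DP: "degree (DP a n) \<le> n"
  by (rule degree_le) (simp add: coeff_DP)

lemma poly_DP: "poly (DP a n) x = (\<Sum>i\<le>n. dcf a n i * x ^ i)"
  unfolding DP_def by (simp add: poly_sum poly_monom)

lemma orth_deriv_zero:
  assumes a: "a \<in> {-1<..<1}" and q: "lowdeg q n"
  shows "ipw (omt a) (DP a n) q + ipw (dW a) (opol (omt a) n) q = 0"
proof -
  define c where "c i b = coeff (opol (omt b) n) i" for i b
  define mm where "mm m = integral {-1..1} (\<lambda>x. x ^ m * dW a x)" for m
  have dq: "degree q \<le> n" using q lowdeg_degree by auto
  define G where "G b = (\<Sum>i\<le>n. \<Sum>j\<le>n. c i b * (coeff q j * mom (i + j) b))" for b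
  define V where "V = (\<Sum>i\<le>n. \<Sum>j\<le>n. c i a * (coeff q j * mm (i + j)) + dcf a n i * (coeff q j * mom (i + j) a))"
  have cD: "\<And>i. ((\<lambda>b. c i b) has_real_derivative dcf a n i) (at a)"
    unfolding c_def dcf_def using coeff_opol_diff[OF a] DERIV_deriv_iff_real_differentiable by blast
  have mD: "\<And>m j. ((\<lambda>b. coeff q j * mom m b) has_real_derivative coeff q j * mm m) (at a)"
    unfolding mm_def by (intro DERIV_cmult mom_deriv[OF a])
  have GD: "(G has_real_derivative V) (at a)"
    unfolding G_def V_def
    by (intro DERIV_sum DERIV_mult' cD mD)
  have G0: "\<And>b. b \<in> {-1<..<1} \<Longrightarrow> 0 = G b"
  proof -
    fix b :: real assume b: "b \<in> {-1<..<1}"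
    have c: "continuous_on {-1..1} (omt b)" using goodw_omt[OF b] goodw_def by auto
    have "ipw (omt b) (opol (omt b) n) q = G b"
      unfolding ipw_expand[OF c _ dq, of "opol (omt b) n" n, simplified] G_def c_def mom_def
      by (simp add: mult.assoc)
    then show "0 = G b" using opol_orth'[OF goodw_omt[OF b] q] by simp
  qed
  have "(G has_real_derivative 0) (at a)"
    by (rule has_field_derivative_transform_within_open[OF DERIV_const _ a G0]) simp
  then have V0: "V = 0" using DERIV_unique[OF GD] by simp
  have c1: "continuous_on {-1..1} (omt a)" using goodw_omt[OF a] goodw_def by auto
  have e1: "ipw (omt a) (DP a n) q = (\<Sum>i\<le>n. \<Sum>j\<le>n. dcf a n i * (coeff q j * mom (i + j) a))"
    unfolding ipw_expand[OF c1 degree_DP dq] mom_def by (intro sum.cong refl) (simp add: coeff_DP)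
  have e2: "ipw (dW a) (opol (omt a) n) q = (\<Sum>i\<le>n. \<Sum>j\<le>n. c i a * (coeff q j * mm (i + j)))"
    unfolding ipw_expand[OF dW_cont[OF a] _ dq, of "opol (omt a) n" n, simplified] mm_def c_def
    by (simp add: mult.assoc)
  have "ipw (omt a) (DP a n) q + ipw (dW a) (opol (omt a) n) q = V"
    unfolding e1 e2 V_def by (simp add: sum.distrib[symmetric] add.commute)
  then show ?thesis using V0 by simp
qed

lemma deriv_neg:
  assumes a: "a \<in> {-1<..<1}" and ry: "rootfun (omt a) n y" and k: "k < n"
  shows "- (\<Sum>i\<le>n. deriv (\<lambda>b. coeff (opol (omt b) n) i) a * y k ^ i) / poly (QQ (y ` {..<n}) (y k)) (y k) < 0"
proof -
  define x0 where "x0 = y k"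
  define R where "R = y ` {..<n}"
  define h where "h = QQ R x0"
  define W where "W = ipw (omt a) (LL R x0) 1"
  have w: "goodw (omt a)" by (rule goodw_omt[OF a])
  have c1: "continuous_on {-1..1} (omt a)" using w goodw_def by auto
  have Rfin: "finite R" unfolding R_def by simp
  have cR: "card R = n" unfolding R_def by (rule rootfun_card[OF ry])
  have x0R: "x0 \<in> R" unfolding R_def x0_def using k by simp
  have hx0: "poly h x0 \<noteq> 0" unfolding h_def by (rule QQ_facts(1)[OF Rfin x0R])
  have hz: "\<And>r. r \<in> R \<Longrightarrow> r \<noteq> x0 \<Longrightarrow> poly h r = 0" unfolding h_def by (rule QQ_facts(2)[OF Rfin x0R])
  have lh: "lowdeg h n" unfolding h_def using QQ_facts(4)[OF Rfin x0R] cR by simp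
  have hnz: "h \<noteq> 0" using hx0 by auto
  have "opol (omt a) n = pr R" unfolding R_def by (rule rootfun_pr[OF ry])
  also have "\<dots> = [:-x0, 1:] * h" unfolding h_def by (rule QQ_facts(3)[OF Rfin x0R])
  finally have Pe: "opol (omt a) n = [:-x0, 1:] * h" .
  have Pa: "\<And>x. poly (opol (omt a) n) x = (x - x0) * poly h x"
    by (simp only: Pe poly_mult) simp
  have x0in: "-1 < x0 \<and> x0 < 1"
    using root_in[OF w, of n x0] ry x0R unfolding rootfun_def R_def by auto
  have Wpos: "W > 0" unfolding W_def R_def using weights_pos[OF w ry] x0R R_def by simp
  have orthP: "ipw (omt a) (opol (omt a) n) h = 0" by (rule opol_orth'[OF w lh])
  have neg: "ipw (dW a) (opol (omt a) n) h < 0"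
    by (rule dW_part_neg[OF a _ _ hnz Pa orthP]) (use x0in in auto)
  have n1: "n \<ge> 1" using k by simp
  then obtain m where m: "n = Suc m" by (metis Suc_le_D One_nat_def)
  have lf: "lowdeg (DP a n * h) (2 * n)"
  proof -
    have "lowdeg (DP a n * h) (Suc (m + m))" using lowdeg_mult[of "DP a n" m h m] lowdeg_DP[of a n] lh m by simp
    then show ?thesis by (rule lowdeg_mono) (simp add: m)
  qed
  have "ipw (omt a) (DP a n) h = ipw (omt a) (DP a n * h) 1" using ipw_mult[of "omt a" "DP a n" h 1] by simp
  also have "\<dots> = (\<Sum>r\<in>R. poly (DP a n * h) r * ipw (omt a) (LL R r) 1)" unfolding R_def by (rule quadrature[OF w ry lf])
  also have "\<dots> = poly (DP a n * h) x0 * W + (\<Sum>r\<in>R - {x0}. poly (DP a n * h) r * ipw (omt a) (LL R r) 1)"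
    unfolding W_def by (rule sum.remove[OF Rfin x0R])
  also have "(\<Sum>r\<in>R - {x0}. poly (DP a n * h) r * ipw (omt a) (LL R r) 1) = 0"
    using hz by (intro sum.neutral) auto
  finally have q: "ipw (omt a) (DP a n) h = poly (DP a n) x0 * poly h x0 * W" by simp
  have "ipw (omt a) (DP a n) h + ipw (dW a) (opol (omt a) n) h = 0" by (rule orth_deriv_zero[OF a lh])
  then have "poly (DP a n) x0 * poly h x0 * W > 0" using q neg by simp
  then have pos: "poly (DP a n) x0 * poly h x0 > 0" using Wpos by (simp add: zero_less_mult_iff)
  have "(\<Sum>i\<le>n. deriv (\<lambda>b. coeff (opol (omt b) n) i) a * x0 ^ i) = poly (DP a n) x0"
    unfolding poly_DP dcf_def ..
  moreover have "- poly (DP a n) x0 / poly h x0 < 0"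
    using pos by (auto simp: zero_less_mult_iff divide_neg_pos divide_pos_neg divide_neg_neg divide_pos_pos)
  ultimately show ?thesis unfolding x0_def h_def R_def by simp
qed


theorem mainTheorem6:
  fixes N :: nat
  assumes "N \<ge> 1"
  shows "(\<forall>k\<le>N. \<forall>a\<in>{-1<..<1::real}.
            \<exists>d. ((\<lambda>b. lam b (N+1) k) has_real_derivative d) (at a) \<and> d < 0)
       \<and> (\<forall>a\<in>{-1<..<1::real}. \<forall>k<N.
            lam a (N+1) k < lam a N k \<and> lam a N k < lam a (N+1) (k+1))
       \<and> (\<forall>a\<in>{-1<..<1::real}.
            lam a (N+1) 0 < integral {-1..1} (\<lambda>\<mu>. \<mu> * om a \<mu>) / integral {-1..1} (om a)
          \<and> integral {-1..1} (\<lambda>\<mu>. \<mu> * om a \<mu>) / integral {-1..1} (om a) < lam a (N+1) N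
          \<and> (\<forall>f. f 0 \<noteq> 0 \<and> f 1 = 0 \<longrightarrow>
                lam a (N+1) 0 < moment a N f 1 / moment a N f 0
              \<and> moment a N f 1 / moment a N f 0 < lam a (N+1) N))"
proof (intro conjI allI ballI impI)
  fix k a assume k: "k \<le> N" and a: "a \<in> {-1<..<1::real}"
  obtain xs ys where r: "rootfun (omt a) (Suc N) ys"
    using opol_roots_all[OF goodw_omt[OF a], of N] by blast
  have k': "k < Suc N" using k by simp
  show "\<exists>d. ((\<lambda>b. lam b (N+1) k) has_real_derivative d) (at a) \<and> d < 0"
    using lam_deriv[OF a r k'] deriv_neg[OF a r k'] by auto
next
  fix a k assume a: "a \<in> {-1<..<1::real}" and k: "k < N"
  show "lam a (N+1) k < lam a N k" using part2[OF a k] by simp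
  show "lam a N k < lam a (N+1) (k+1)" using part2[OF a k] by simp
next
  fix a assume a: "a \<in> {-1<..<1::real}"
  show "lam a (N+1) 0 < integral {-1..1} (\<lambda>\<mu>. \<mu> * om a \<mu>) / integral {-1..1} (om a)"
    using part3[OF a assms] by simp
  show "integral {-1..1} (\<lambda>\<mu>. \<mu> * om a \<mu>) / integral {-1..1} (om a) < lam a (N+1) N"
    using part3[OF a assms] by simp
  fix f :: "nat \<Rightarrow> real" assume f: "f 0 \<noteq> 0 \<and> f 1 = 0"
  show "lam a (N+1) 0 < moment a N f 1 / moment a N f 0"
    using part3[OF a assms] part3b[OF a, of f N] f by simp
  show "moment a N f 1 / moment a N f 0 < lam a (N+1) N"
    using part3[OF a assms] part3b[OF a, of f N] f by simp
qed

end
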